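(* Let $\lambda>0$, $\Gamma>0$, $a>0$ be real numbers with $\lambda>6\max\{\Gamma,1/a\}$, and let $p\in L^1(\mathbb{R})\cap C(\mathbb{R})$ satisfy $|\widehat p(\xi)|\le\Gamma e^{-a|\xi|}$ for all $\xi\in\mathbb{R}$. Then there exists a solution $\sigma\in L^2(\mathbb{R})\cap C^\infty(\mathbb{R})$, with $\widehat\sigma\in L^1(\mathbb{R})$, of the band-limited integral equation $$\sigma(x)=S[T_b\sigma](x)+p(x)\quad\text{for all }x\in\mathbb{R},$$ such that $$|\widehat\sigma(\xi)|\le2\Gamma\exp\!\left(-\left(a-\frac1\lambda\right)|\xi|\right)\quad\text{for all }\xi\in\mathbb{R}.$$
   Context: Fourier transform convention: $\widehat f(\xi)=\int f(x)e^{-ix\xi}dx$, inverse $\frac1{2\pi}\int\widehat f(\xi)e^{ix\xi}d\xi$. Fix an infinitely differentiable $b:\mathbb{R}\to[0,1]$ with $b(\xi)=1$ for $|\xi|\le\lambda$ and $b(\xi)=0$ for $|\xi|\ge\sqrt2\lambda$. For $f$ with integrable Fourier transform, $T_bf(x)=\frac1{2\pi}\int_{\mathbb{R}}e^{ix\xi}\widehat f(\xi)\frac{b(\xi)}{4\lambda^2-\xi^2}d\xi$. For $f\in C^1(\mathbb{R})$, $S[f](x)=\frac14(f'(x))^2-4\lambda^2\left(e^{f(x)}-1-f(x)\right)$. *)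

theory Defs
  imports "HOL-Analysis.Analysis"
begin

definition fourier :: "(real \<Rightarrow> complex) \<Rightarrow> real \<Rightarrow> complex" where
  "fourier f \<xi> = (LINT x|lborel. f x * cis (- (x * \<xi>)))"

definition inv_fourier :: "(real \<Rightarrow> complex) \<Rightarrow> real \<Rightarrow> complex" where
  "inv_fourier g x = (LINT \<xi>|lborel. g \<xi> * cis (x * \<xi>)) / complex_of_real (2 * pi)"

definition C_inf :: "(real \<Rightarrow> 'a::real_normed_vector) \<Rightarrow> bool" where
  "C_inf f \<longleftrightarrow> (\<exists>D. D 0 = f \<and> (\<forall>n x. (D n has_vector_derivative D (Suc n) x) (at x)))"

definition L2 :: "(real \<Rightarrow> complex) \<Rightarrow> bool" where
  "L2 f \<longleftrightarrow> f \<in> borel_measurable lborel \<and> integrable lborel (\<lambda>x. (cmod (f x))\<^sup>2)"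

text \<open>The operator T_b, expressed through the Fourier transform fh of its argument:
  T_b f (x) = (1/(2 pi)) int e^{i x xi} fh(xi) b(xi)/(4 lam^2 - xi^2) d xi.\<close>
definition Tb_hat :: "real \<Rightarrow> (real \<Rightarrow> real) \<Rightarrow> (real \<Rightarrow> complex) \<Rightarrow> real \<Rightarrow> complex" where
  "Tb_hat lam b fh x = inv_fourier (\<lambda>\<xi>. fh \<xi> * complex_of_real (b \<xi> / (4 * lam\<^sup>2 - \<xi>\<^sup>2))) x"

definition S_op :: "real \<Rightarrow> (real \<Rightarrow> complex) \<Rightarrow> real \<Rightarrow> complex" where
  "S_op lam f x = (vector_derivative f (at x))\<^sup>2 / 4 - 4 * complex_of_real (lam\<^sup>2) * (exp (f x) - 1 - f x)"

end

theory Submission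
  imports Defs "HOL-Probability.Probability"
begin

lemma borel_measurable_cis[measurable (raw)]:
  "f \<in> borel_measurable M \<Longrightarrow> (\<lambda>x. cis (f x)) \<in> borel_measurable M"
proof -
  have "cis \<in> borel_measurable borel"
    by (intro borel_measurable_continuous_onI continuous_on_cis continuous_on_id)
  moreover assume "f \<in> borel_measurable M"
  ultimately show ?thesis using measurable_compose by blast
qed

lemma integral_shift:
  fixes f :: "real \<Rightarrow> 'a :: {banach, second_countable_topology}"
  shows "(LINT x|lborel. f (t + x)) = (LINT x|lborel. f x)"
  using lborel_integral_real_affine[of 1 f t] by simp

lemma integral_shift':
  fixes f :: "real \<Rightarrow> 'a :: {banach, second_countable_topology}"
  shows "(LINT x|lborel. f (x - t)) = (LINT x|lborel. f x)"
  using integral_shift[of f "-t"] by simp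

lemma integral_reflect:
  fixes f :: "real \<Rightarrow> 'a :: {banach, second_countable_topology}"
  shows "(LINT x|lborel. f (- x)) = (LINT x|lborel. f x)"
  using lborel_integral_real_affine[of "-1" f 0] by simp

lemma integrable_shift:
  fixes f :: "real \<Rightarrow> 'a :: {banach, second_countable_topology}"
  shows "integrable lborel (\<lambda>x. f (t + x)) \<longleftrightarrow> integrable lborel f"
  using lborel_integrable_real_affine_iff[of 1 f t] by simp

lemma integrable_shift':
  fixes f :: "real \<Rightarrow> 'a :: {banach, second_countable_topology}"
  shows "integrable lborel (\<lambda>x. f (x - t)) \<longleftrightarrow> integrable lborel f"
  using integrable_shift[of f "-t"] by simp

lemma integrable_reflect:
  fixes f :: "real \<Rightarrow> 'a :: {banach, second_countable_topology}"
  shows "integrable lborel (\<lambda>x. f (- x)) \<longleftrightarrow> integrable lborel f"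
  using lborel_integrable_real_affine_iff[of "-1" f 0] by simp

lemma int_pow_exp_pos:
  assumes "c > 0"
  shows "integrable lborel (\<lambda>x::real. x^k * exp (-c*x) * indicator {0..} x)"
proof -
  have h: "integrable lborel (\<lambda>x::real. x^k * exp (-x) * indicator {0..} x)"
    using has_bochner_integral_I0i_power_exp_m' by (rule integrable.intros)
  have "integrable lborel (\<lambda>x::real. (0 + c*x)^k * exp (-(0 + c*x)) * indicator {0..} (0 + c*x))"
    using lborel_integrable_real_affine_iff[of c "\<lambda>x::real. x^k * exp (-x) * indicator {0..} x" 0] h assms
    by simp
  then have "integrable lborel (\<lambda>x::real. (1/c^k) * ((0 + c*x)^k * exp (-(0 + c*x)) * indicator {0..} (0 + c*x)))"
    by simp
  moreover have "(\<lambda>x::real. (1/c^k) * ((0 + c*x)^k * exp (-(0 + c*x)) * indicator {0..} (0 + c*x)))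
     = (\<lambda>x::real. x^k * exp (-c*x) * indicator {0..} x)"
    using assms by (auto simp: fun_eq_iff power_mult_distrib indicator_def zero_le_mult_iff)
  ultimately show ?thesis by simp
qed

lemma int_pow_exp:
  assumes "c > 0"
  shows "integrable lborel (\<lambda>x::real. \<bar>x\<bar>^k * exp (-c*\<bar>x\<bar>))"
proof -
  have h1: "integrable lborel (\<lambda>x::real. x^k * exp (-c*x) * indicator {0..} x)"
    using int_pow_exp_pos[OF assms] .
  have h2: "integrable lborel (\<lambda>x::real. (-x)^k * exp (-c*(-x)) * indicator {0..} (-x))"
    using h1 integrable_reflect[of "\<lambda>x::real. x^k * exp (-c*x) * indicator {0..} x"] by simp
  have "integrable lborel (\<lambda>x::real. x^k * exp (-c*x) * indicator {0..} x + (-x)^k * exp (-c*(-x)) * indicator {0..} (-x))"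
    using h1 h2 by (rule Bochner_Integration.integrable_add)
  then show ?thesis
  proof (rule Bochner_Integration.integrable_bound)
    show "(\<lambda>x::real. \<bar>x\<bar>^k * exp (-c*\<bar>x\<bar>)) \<in> borel_measurable lborel" by measurable
    show "AE x in lborel. norm (\<bar>x\<bar>^k * exp (-c*\<bar>x\<bar>)) \<le> norm (x^k * exp (-c*x) * indicator {0..} x + (-x)^k * exp (-c*(-x)) * indicator {0..} (-x))"
    proof (intro AE_I2)
      fix x :: real
      show "norm (\<bar>x\<bar>^k * exp (-c*\<bar>x\<bar>)) \<le> norm (x^k * exp (-c*x) * indicator {0..} x + (-x)^k * exp (-c*(-x)) * indicator {0..} (-x))"
      proof (cases "x \<ge> 0")
        case True
        then show ?thesis by (cases "x = 0") (auto simp: indicator_def)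
      next
        case False
        then have "\<bar>x\<bar> = -x" by simp
        then show ?thesis using False by (auto simp: indicator_def)
      qed
    qed
  qed
qed

lemma int_exp_abs:
  assumes "c > 0"
  shows "integrable lborel (\<lambda>x::real. exp (-c*\<bar>x\<bar>))"
  using int_pow_exp[OF assms, of 0] by simp

lemma gauss_le_exp_abs:
  fixes e x :: real
  assumes "e > 0"
  shows "exp (-e*x\<^sup>2) \<le> exp (1/(4*e)) * exp (- \<bar>x\<bar>)"
proof -
  have sq: "\<bar>x\<bar>\<^sup>2 = x\<^sup>2" by simp
  have "e*x\<^sup>2 - \<bar>x\<bar> + 1/(4*e) = (e*\<bar>x\<bar> - 1/2)\<^sup>2 / e"
    using assms unfolding sq[symmetric] by (simp add: field_simps power2_eq_square)
  also have "\<dots> \<ge> 0" using assms by simp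
  finally have "-e*x\<^sup>2 \<le> 1/(4*e) + (- \<bar>x\<bar>)" by simp
  then show ?thesis by (metis exp_add exp_le_cancel_iff)
qed

lemma int_gauss:
  assumes "e > 0"
  shows "integrable lborel (\<lambda>x::real. exp (-e*x\<^sup>2))"
proof -
  have i: "integrable lborel (\<lambda>x::real. exp (1/(4*e)) * exp (- \<bar>x\<bar>))"
    using int_exp_abs[of 1] by simp
  show ?thesis
    using i by (rule Bochner_Integration.integrable_bound) (use gauss_le_exp_abs[OF assms] in auto)
qed

lemma int_gauss_cis:
  assumes "e > 0"
  shows "integrable lborel (\<lambda>x::real. complex_of_real (exp (-e*x\<^sup>2)) * cis (s*x))"
proof -
  have "integrable lborel (\<lambda>x::real. exp (-e*x\<^sup>2))" using int_gauss[OF assms] .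
  then show ?thesis
    by (rule Bochner_Integration.integrable_bound) (auto simp: norm_mult)
qed

lemma gauss_ft:
  assumes "e > 0"
  shows "(LINT x|lborel. complex_of_real (exp (-e*x\<^sup>2)) * cis (s*x)) = complex_of_real (sqrt (pi/e) * exp (-s\<^sup>2/(4*e)))"
proof -
  define c where "c = sqrt (2*e)"
  have c0: "c > 0" using assms by (simp add: c_def)
  have cc: "c\<^sup>2 = 2*e" using assms by (simp add: c_def)
  define t where "t = s / c"
  have "char std_normal_distribution t = complex_of_real (exp (- (t^2) / 2))"
    by (simp add: char_std_normal_distribution)
  moreover have "char std_normal_distribution t = (LINT x|lborel. std_normal_density x *\<^sub>R iexp (t*x))"
    unfolding char_def
    by (subst integral_density) (auto simp: normal_density_nonneg)
  ultimately have h1: "(LINT x|lborel. std_normal_density x *\<^sub>R iexp (t*x)) = complex_of_real (exp (- (t^2) / 2))"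
    by simp
  have "(LINT x|lborel. std_normal_density x *\<^sub>R iexp (t*x)) = \<bar>c\<bar> *\<^sub>R (LINT x|lborel. std_normal_density (0 + c*x) *\<^sub>R iexp (t*(0 + c*x)))"
    using c0 by (intro lborel_integral_real_affine) simp
  also have "(\<lambda>x. std_normal_density (0 + c*x) *\<^sub>R iexp (t*(0 + c*x))) = (\<lambda>x. (1/sqrt (2*pi)) *\<^sub>R (complex_of_real (exp (-e*x\<^sup>2)) * cis (s*x)))"
  proof
    fix x
    have a: "- (c * x)\<^sup>2 / 2 = -e*x\<^sup>2" using cc by (simp add: power_mult_distrib)
    have b: "t * (0 + c*x) = s*x" using c0 by (simp add: t_def)
    have b': "iexp (t*(0 + c*x)) = cis (s*x)" by (simp only: b cis_conv_exp)
    show "std_normal_density (0 + c*x) *\<^sub>R iexp (t*(0 + c*x)) = (1/sqrt (2*pi)) *\<^sub>R (complex_of_real (exp (-e*x\<^sup>2)) * cis (s*x))"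
      unfolding std_normal_density_def b' using a by (simp add: scaleR_conv_of_real mult.commute)
  qed
  finally have "\<bar>c\<bar> *\<^sub>R ((1/sqrt (2*pi)) *\<^sub>R (LINT x|lborel. complex_of_real (exp (-e*x\<^sup>2)) * cis (s*x))) = complex_of_real (exp (- (t^2) / 2))"
    using h1 by simp
  then have hh: "(c / sqrt (2*pi)) *\<^sub>R (LINT x|lborel. complex_of_real (exp (-e*x\<^sup>2)) * cis (s*x)) = complex_of_real (exp (- (t^2) / 2))"
    using c0 by simp
  have "(LINT x|lborel. complex_of_real (exp (-e*x\<^sup>2)) * cis (s*x)) = (sqrt (2*pi) / c) *\<^sub>R ((c / sqrt (2*pi)) *\<^sub>R (LINT x|lborel. complex_of_real (exp (-e*x\<^sup>2)) * cis (s*x)))"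
    using c0 by simp
  then have "(LINT x|lborel. complex_of_real (exp (-e*x\<^sup>2)) * cis (s*x)) = (sqrt (2*pi) / c) *\<^sub>R complex_of_real (exp (- (t^2) / 2))"
    unfolding hh .
  also have "(sqrt (2*pi) / c) = sqrt (pi/e)"
    using assms by (simp add: c_def real_sqrt_divide[symmetric])
  also have "- (t^2) / 2 = -s\<^sup>2/(4*e)"
    using cc c0 assms by (simp add: t_def power_divide)
  finally show ?thesis by (simp add: scaleR_conv_of_real)
qed

definition G :: "real \<Rightarrow> real \<Rightarrow> real" where
  "G e s = sqrt (pi/e) * exp (-s\<^sup>2/(4*e))"

lemma G_nonneg: "e > 0 \<Longrightarrow> G e s \<ge> 0"
  by (simp add: G_def)

lemma G_even: "G e (-s) = G e s"
  by (simp add: G_def)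

lemma gauss_real:
  assumes "e > 0"
  shows "(LINT x|lborel. exp (-e*x\<^sup>2)) = sqrt (pi/e)"
proof -
  have "complex_of_real (LINT x|lborel. exp (-e*x\<^sup>2)) = (LINT x|lborel. complex_of_real (exp (-e*x\<^sup>2)) * cis (0*x))"
    by (simp add: integral_complex_of_real)
  also have "\<dots> = complex_of_real (sqrt (pi/e))"
    using gauss_ft[OF assms, of 0] by simp
  finally show ?thesis by simp
qed

lemma G_alt: "e > 0 \<Longrightarrow> G e s = sqrt (pi/e) * exp (-(1/(4*e))* s\<^sup>2)"
  by (simp add: G_def)

lemma G_integrable:
  assumes "e > 0"
  shows "integrable lborel (G e)"
proof -
  have i: "integrable lborel (\<lambda>s. sqrt (pi/e) * exp (-(1/(4*e)) * s\<^sup>2))"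
    using int_gauss[of "1/(4*e)"] assms by simp
  have "G e = (\<lambda>s. sqrt (pi/e) * exp (-(1/(4*e)) * s\<^sup>2))"
    by (rule ext) (rule G_alt[OF assms])
  then show ?thesis using i by simp
qed

lemma G_integral:
  assumes "e > 0"
  shows "(LINT s|lborel. G e s) = 2*pi"
proof -
  have "(LINT s|lborel. G e s) = (LINT s|lborel. sqrt (pi/e) * exp (-(1/(4*e)) * s\<^sup>2))"
    using G_alt[OF assms] by simp
  also have "\<dots> = sqrt (pi/e) * (LINT s|lborel. exp (-(1/(4*e)) * s\<^sup>2))"
    by (rule integral_mult_right_zero)
  also have "(LINT s|lborel. exp (-(1/(4*e)) * s\<^sup>2)) = sqrt (pi/(1/(4*e)))"
    using gauss_real[of "1/(4*e)"] assms by simp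
  also have "sqrt (pi/e) * sqrt (pi/(1/(4*e))) = sqrt ((pi/e) * (pi/(1/(4*e))))"
    by (rule real_sqrt_mult[symmetric])
  also have "(pi/e) * (pi/(1/(4*e))) = (2*pi)\<^sup>2" using assms by (simp add: field_simps power2_eq_square)
  also have "sqrt ((2*pi)\<^sup>2) = 2*pi" by (rule real_sqrt_unique) auto
  finally show ?thesis .
qed

lemma fourier_measurable[measurable]:
  assumes [measurable]: "f \<in> borel_measurable lborel"
  shows "fourier f \<in> borel_measurable borel"
proof -
  have "(\<lambda>\<xi>. LINT x|lborel. f x * cis (- (x * \<xi>))) \<in> borel_measurable borel"
    by measurable
  then show ?thesis unfolding fourier_def[abs_def] .
qed

lemma fourier_bound:
  assumes "integrable lborel f"
  shows "norm (fourier f \<xi>) \<le> (LINT x|lborel. norm (f x))"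
proof -
  have "norm (fourier f \<xi>) \<le> (LINT x|lborel. norm (f x * cis (- (x * \<xi>))))"
    unfolding fourier_def by (rule integral_norm_bound)
  also have "\<dots> = (LINT x|lborel. norm (f x))" by (simp add: norm_mult)
  finally show ?thesis .
qed

lemma gauss_fubini:
  fixes f :: "real \<Rightarrow> complex"
  assumes fi: "integrable lborel f" and e: "e > 0"
  shows "(LINT \<xi>|lborel. fourier f \<xi> * cis (x*\<xi>) * complex_of_real (exp (-e*\<xi>\<^sup>2)))
       = (LINT y|lborel. f y * complex_of_real (G e (x - y)))"
proof -
  have [measurable]: "f \<in> borel_measurable lborel" using fi by auto
  define F where "F = (\<lambda>\<xi> y. f y * cis (- (y*\<xi>)) * cis (x*\<xi>) * complex_of_real (exp (-e*\<xi>\<^sup>2)))"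
  have Fm: "(\<lambda>(\<xi>,y). F \<xi> y) \<in> borel_measurable (lborel \<Otimes>\<^sub>M lborel)"
    unfolding F_def by measurable
  have nF: "norm (F \<xi> y) = norm (f y) * exp (-e*\<xi>\<^sup>2)" for \<xi> y
    by (simp add: F_def norm_mult)
  have Fint: "integrable (lborel \<Otimes>\<^sub>M lborel) (\<lambda>(\<xi>,y). F \<xi> y)"
  proof (rule lborel_pair.Fubini_integrable)
    show "(\<lambda>(\<xi>,y). F \<xi> y) \<in> borel_measurable (lborel \<Otimes>\<^sub>M lborel)" using Fm .
    have "integrable lborel (\<lambda>\<xi>. exp (-e*\<xi>\<^sup>2) * (LINT y|lborel. norm (f y)))"
      using int_gauss[OF e] by simp
    then show "integrable lborel (\<lambda>\<xi>. LINT y|lborel. norm (case (\<xi>, y) of (\<xi>, y) \<Rightarrow> F \<xi> y))"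
      by (simp add: nF mult.commute)
    show "AE \<xi> in lborel. integrable lborel (\<lambda>y. case (\<xi>, y) of (\<xi>, y) \<Rightarrow> F \<xi> y)"
    proof (intro AE_I2)
      fix \<xi>
      have "integrable lborel (\<lambda>y. norm (f y) * exp (-e*\<xi>\<^sup>2))"
        using fi by simp
      then show "integrable lborel (\<lambda>y. case (\<xi>, y) of (\<xi>, y) \<Rightarrow> F \<xi> y)"
        by (rule Bochner_Integration.integrable_bound) (use Fm in \<open>auto simp: nF\<close>)
    qed
  qed
  have "(LINT \<xi>|lborel. fourier f \<xi> * cis (x*\<xi>) * complex_of_real (exp (-e*\<xi>\<^sup>2)))
      = (LINT \<xi>|lborel. LINT y|lborel. F \<xi> y)"
    unfolding fourier_def F_def by (simp add: integral_mult_left_zero)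
  also have "\<dots> = (LINT y|lborel. LINT \<xi>|lborel. F \<xi> y)"
    using lborel_pair.Fubini_integral[OF Fint] by simp
  also have "\<dots> = (LINT y|lborel. f y * complex_of_real (G e (x - y)))"
  proof (rule Bochner_Integration.integral_cong[OF refl])
    fix y
    have "(LINT \<xi>|lborel. F \<xi> y) = (LINT \<xi>|lborel. f y * (complex_of_real (exp (-e*\<xi>\<^sup>2)) * cis ((x - y)*\<xi>)))"
      unfolding F_def by (intro Bochner_Integration.integral_cong refl)
        (simp add: cis_mult algebra_simps)
    also have "\<dots> = f y * (LINT \<xi>|lborel. complex_of_real (exp (-e*\<xi>\<^sup>2)) * cis ((x - y)*\<xi>))"
      by (rule integral_mult_right_zero)
    also have "\<dots> = f y * complex_of_real (G e (x - y))"
      using gauss_ft[OF e, of "x - y"] by (simp add: G_def)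
    finally show "(LINT \<xi>|lborel. F \<xi> y) = f y * complex_of_real (G e (x - y))" .
  qed
  finally show ?thesis .
qed

lemma G_measurable[measurable (raw)]:
  "f \<in> borel_measurable M \<Longrightarrow> (\<lambda>x. G e (f x)) \<in> borel_measurable M"
  unfolding G_def by (intro borel_measurable_times borel_measurable_exp borel_measurable_divide borel_measurable_uminus borel_measurable_power) auto

lemma G_shift_integrable:
  assumes "e > 0"
  shows "integrable lborel (\<lambda>y. G e (x - y))"
proof -
  have "integrable lborel (\<lambda>y. G e (y - x))"
    using G_integrable[OF assms] integrable_shift'[of "G e" x] by simp
  then show ?thesis by (metis (no_types, lifting) G_even minus_diff_eq ext)
qed

lemma G_shift_integral:
  assumes "e > 0"
  shows "(LINT y|lborel. G e (x - y)) = 2*pi"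
proof -
  have "(LINT y|lborel. G e (x - y)) = (LINT y|lborel. G e (y - x))"
    by (metis (no_types, lifting) G_even minus_diff_eq)
  also have "\<dots> = 2*pi" using integral_shift'[of "G e" x] G_integral[OF assms] by simp
  finally show ?thesis .
qed

lemma G_le: "e > 0 \<Longrightarrow> G e s \<le> sqrt (pi/e)"
  by (simp add: G_def)

lemma G_tail1:
  assumes "e > 0" "\<bar>s\<bar> \<ge> d" "d \<ge> 0"
  shows "G e s \<le> sqrt (pi/e) * exp (-d\<^sup>2/(4*e))"
proof -
  have "d\<^sup>2 \<le> s\<^sup>2" using assms by (metis abs_ge_zero power2_abs power_mono)
  then have "-s\<^sup>2/(4*e) \<le> -d\<^sup>2/(4*e)" using assms by (simp add: divide_right_mono)
  then show ?thesis unfolding G_def by (intro mult_left_mono) (use assms in auto)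
qed

lemma G_tail2:
  assumes "e > 0" "\<bar>s\<bar> \<ge> d" "d \<ge> 0"
  shows "G e s \<le> sqrt (pi/e) * exp (-d\<^sup>2/(8*e)) * exp (-(1/(8*e)) * s\<^sup>2)"
proof -
  have "d\<^sup>2 \<le> s\<^sup>2" using assms by (metis abs_ge_zero power2_abs power_mono)
  then have "-s\<^sup>2/(4*e) \<le> -d\<^sup>2/(8*e) + (-(1/(8*e)) * s\<^sup>2)" using assms by (simp add: field_simps)
  then have "exp (-s\<^sup>2/(4*e)) \<le> exp (-d\<^sup>2/(8*e)) * exp (-(1/(8*e)) * s\<^sup>2)"
    by (metis exp_add exp_le_cancel_iff)
  then show ?thesis unfolding G_def mult.assoc by (intro mult_left_mono) (use assms in auto)
qed

theorem fourier_inversion: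
  fixes f :: "real \<Rightarrow> complex"
  assumes fi: "integrable lborel f" and fc: "continuous_on UNIV f"
    and Fi: "integrable lborel (fourier f)"
  shows "inv_fourier (fourier f) x = f x"
proof -
  have [measurable]: "f \<in> borel_measurable lborel" using fi by auto
  define e where "e = (\<lambda>n::nat. 1 / real (Suc n))"
  have e0: "e n > 0" for n by (simp add: e_def)
  have elim: "e \<longlonglongrightarrow> 0" unfolding e_def using LIMSEQ_inverse_real_of_nat by (simp add: inverse_eq_divide)
  define I where "I = (LINT \<xi>|lborel. fourier f \<xi> * cis (x*\<xi>))"
  define J where "J = (\<lambda>n. LINT y|lborel. f y * complex_of_real (G (e n) (x - y)))"
  have limA: "(\<lambda>n. LINT \<xi>|lborel. fourier f \<xi> * cis (x*\<xi>) * complex_of_real (exp (-(e n)*\<xi>\<^sup>2))) \<longlonglongrightarrow> I"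
    unfolding I_def
  proof (rule integral_dominated_convergence[where w = "\<lambda>\<xi>. norm (fourier f \<xi>)"])
    show "(\<lambda>\<xi>. fourier f \<xi> * cis (x*\<xi>)) \<in> borel_measurable lborel" by measurable
    show "\<And>n. (\<lambda>\<xi>. fourier f \<xi> * cis (x*\<xi>) * complex_of_real (exp (-(e n)*\<xi>\<^sup>2))) \<in> borel_measurable lborel"
      by measurable
    show "integrable lborel (\<lambda>\<xi>. norm (fourier f \<xi>))" using Fi by simp
    show "AE \<xi> in lborel. (\<lambda>n. fourier f \<xi> * cis (x*\<xi>) * complex_of_real (exp (-(e n)*\<xi>\<^sup>2))) \<longlonglongrightarrow> fourier f \<xi> * cis (x*\<xi>)"
    proof (intro AE_I2)
      fix \<xi>
      have "(\<lambda>n. fourier f \<xi> * cis (x*\<xi>) * complex_of_real (exp (-(e n)*\<xi>\<^sup>2))) \<longlonglongrightarrow> fourier f \<xi> * cis (x*\<xi>) * complex_of_real (exp (-0*\<xi>\<^sup>2))"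
        by (intro tendsto_intros elim)
      then show "(\<lambda>n. fourier f \<xi> * cis (x*\<xi>) * complex_of_real (exp (-(e n)*\<xi>\<^sup>2))) \<longlonglongrightarrow> fourier f \<xi> * cis (x*\<xi>)"
        by simp
    qed
    show "\<And>n. AE \<xi> in lborel. norm (fourier f \<xi> * cis (x*\<xi>) * complex_of_real (exp (-(e n)*\<xi>\<^sup>2))) \<le> norm (fourier f \<xi>)"
    proof (intro AE_I2)
      fix n \<xi>
      have "exp (-(e n)*\<xi>\<^sup>2) \<le> 1" using e0[of n] by (simp add: mult_nonneg_nonneg)
      then show "norm (fourier f \<xi> * cis (x*\<xi>) * complex_of_real (exp (-(e n)*\<xi>\<^sup>2))) \<le> norm (fourier f \<xi>)"
        by (simp add: norm_mult mult_left_le)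
    qed
  qed
  have eqJ: "(LINT \<xi>|lborel. fourier f \<xi> * cis (x*\<xi>) * complex_of_real (exp (-(e n)*\<xi>\<^sup>2))) = J n" for n
    unfolding J_def using gauss_fubini[OF fi e0[of n], of x] by simp
  have limB: "J \<longlonglongrightarrow> complex_of_real (2*pi) * f x"
  proof (rule LIMSEQ_I)
    fix r :: real assume r: "r > 0"
    define \<eta> where "\<eta> = r / (4*pi)"
    have \<eta>0: "\<eta> > 0" using r by (simp add: \<eta>_def)
    obtain d where d0: "d > 0" and dd: "\<And>y. dist y x < d \<Longrightarrow> dist (f y) (f x) < \<eta>"
      using fc \<eta>0 unfolding continuous_on_iff by (metis UNIV_I)
    define s where "s = (\<lambda>n. sqrt (pi / e n) * exp (-d\<^sup>2/(4 * e n)))"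
    define T where "T = (\<lambda>n. sqrt (pi / e n) * exp (-d\<^sup>2/(8 * e n)) * sqrt (pi / (1/(8 * e n))))"
    define L1 where "L1 = (LINT y|lborel. norm (f y))"
    have sT: "(\<lambda>n. L1 * s n + norm (f x) * T n) \<longlonglongrightarrow> 0"
    proof -
      have "s \<longlonglongrightarrow> 0" unfolding s_def e_def using d0 by real_asymp
      moreover have "T \<longlonglongrightarrow> 0" unfolding T_def e_def using d0 by real_asymp
      ultimately show ?thesis by (metis (no_types) add_0 mult_zero_right tendsto_add tendsto_mult_left)
    qed
    then obtain N where N: "\<And>n. n \<ge> N \<Longrightarrow> L1 * s n + norm (f x) * T n < r/2"
      using r by (metis (no_types, lifting) LIMSEQ_D diff_zero half_gt_zero order_le_less_trans real_norm_def abs_ge_self)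
    show "\<exists>no. \<forall>n\<ge>no. norm (J n - complex_of_real (2*pi) * f x) < r"
    proof (intro exI allI impI)
      fix n assume nN: "n \<ge> N"
      define en where "en = e n"
      have en0: "en > 0" using e0 by (simp add: en_def)
      define K where "K = (\<lambda>t. sqrt (pi/en) * exp (-d\<^sup>2/(8*en)) * exp (-(1/(8*en)) * t\<^sup>2))"
      have Kint: "integrable lborel (\<lambda>y. K (x - y))"
      proof -
        have "integrable lborel K" unfolding K_def using int_gauss[of "1/(8*en)"] en0 by simp
        then have "integrable lborel (\<lambda>y. K (y - x))" using integrable_shift'[of K x] by simp
        moreover have "K (y - x) = K (x - y)" for y unfolding K_def by (simp add: power2_commute)
        ultimately show ?thesis by simp
      qed
      have Kintegral: "(LINT y|lborel. K (x - y)) = T n"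
      proof -
        have "(LINT y|lborel. K (x - y)) = (LINT y|lborel. K (y - x))"
          unfolding K_def by (simp add: power2_commute)
        also have "\<dots> = (LINT y|lborel. K y)" by (rule integral_shift')
        also have "\<dots> = sqrt (pi/en) * exp (-d\<^sup>2/(8*en)) * (LINT y|lborel. exp (-(1/(8*en)) * y\<^sup>2))"
          unfolding K_def by (rule integral_mult_right_zero)
        also have "\<dots> = T n" unfolding T_def en_def[symmetric] using gauss_real[of "1/(8*en)"] en0 by simp
        finally show ?thesis .
      qed
      define B where "B = (\<lambda>y. \<eta> * G en (x - y) + norm (f y) * s n + norm (f x) * K (x - y))"
      have Bint: "integrable lborel B"
        unfolding B_def using G_shift_integrable[OF en0, of x] fi Kint
        by (intro Bochner_Integration.integrable_add integrable_mult_right integrable_mult_left) auto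
      have Bintegral: "(LINT y|lborel. B y) = \<eta> * (2*pi) + L1 * s n + norm (f x) * T n"
      proof -
        have "(LINT y|lborel. B y) = (LINT y|lborel. \<eta> * G en (x - y)) + (LINT y|lborel. norm (f y) * s n) + (LINT y|lborel. norm (f x) * K (x - y))"
          unfolding B_def using G_shift_integrable[OF en0, of x] fi Kint
          by (subst Bochner_Integration.integral_add; (intro Bochner_Integration.integrable_add integrable_mult_right integrable_mult_left)?; auto)+
        then show ?thesis using G_shift_integral[OF en0, of x] Kintegral by (simp add: L1_def)
      qed
      have Gint: "integrable lborel (\<lambda>y. complex_of_real (G en (x - y)))"
        using G_shift_integrable[OF en0, of x] by (rule integrable_of_real)
      have fGint: "integrable lborel (\<lambda>y. f y * complex_of_real (G en (x - y)))"
      proof -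
        have "integrable lborel (\<lambda>y. norm (f y) * sqrt (pi/en))" using fi by simp
        then show ?thesis
        proof (rule Bochner_Integration.integrable_bound)
          show "(\<lambda>y. f y * complex_of_real (G en (x - y))) \<in> borel_measurable lborel" by measurable
          show "AE y in lborel. norm (f y * complex_of_real (G en (x - y))) \<le> norm (norm (f y) * sqrt (pi/en))"
          proof (intro AE_I2)
            fix y
            have "norm (f y) * G en (x - y) \<le> norm (f y) * sqrt (pi/en)"
              by (intro mult_left_mono G_le[OF en0]) auto
            then show "norm (f y * complex_of_real (G en (x - y))) \<le> norm (norm (f y) * sqrt (pi/en))"
              using G_nonneg[OF en0, of "x - y"] en0 by (simp add: norm_mult)
          qed
        qed
      qed
      have "J n - complex_of_real (2*pi) * f x = (LINT y|lborel. f y * complex_of_real (G en (x - y))) - (LINT y|lborel. f x * complex_of_real (G en (x - y)))"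
      proof -
        have "(LINT y|lborel. f x * complex_of_real (G en (x - y))) = f x * complex_of_real (LINT y|lborel. G en (x - y))"
          by (simp add: integral_complex_of_real)
        then show ?thesis using G_shift_integral[OF en0, of x] by (simp add: J_def en_def mult.commute)
      qed
      also have "\<dots> = (LINT y|lborel. (f y - f x) * complex_of_real (G en (x - y)))"
        using fGint Gint by (simp add: left_diff_distrib)
      finally have Jeq: "J n - complex_of_real (2*pi) * f x = (LINT y|lborel. (f y - f x) * complex_of_real (G en (x - y)))" .
      have ptw: "norm ((f y - f x) * complex_of_real (G en (x - y))) \<le> B y" for y
      proof -
        have Gn: "G en (x - y) \<ge> 0" using G_nonneg[OF en0] .
        have sn: "s n \<ge> 0" unfolding s_def using e0[of n] by simp
        have Kn: "K (x - y) \<ge> 0" unfolding K_def using en0 by simp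
        have lhs: "norm ((f y - f x) * complex_of_real (G en (x - y))) = norm (f y - f x) * G en (x - y)"
          using Gn by (simp add: norm_mult)
        show ?thesis
        proof (cases "\<bar>x - y\<bar> < d")
          case True
          then have "norm (f y - f x) < \<eta>" using dd[of y] by (simp add: dist_norm abs_minus_commute)
          then have "norm (f y - f x) * G en (x - y) \<le> \<eta> * G en (x - y)" using Gn by (simp add: mult_right_mono)
          moreover have "0 \<le> norm (f y) * s n + norm (f x) * K (x - y)" using sn Kn by simp
          ultimately show ?thesis unfolding lhs B_def by linarith
        next
          case False
          then have g1: "G en (x - y) \<le> s n" unfolding s_def en_def[symmetric] using G_tail1[OF en0, of d "x - y"] d0 by simp
          have g2: "G en (x - y) \<le> K (x - y)" unfolding K_def using G_tail2[OF en0, of d "x - y"] d0 False by simp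
          have "norm (f y - f x) * G en (x - y) \<le> (norm (f y) + norm (f x)) * G en (x - y)"
            using Gn by (intro mult_right_mono norm_triangle_ineq4)
          also have "\<dots> = norm (f y) * G en (x - y) + norm (f x) * G en (x - y)" by (simp add: algebra_simps)
          also have "\<dots> \<le> norm (f y) * s n + norm (f x) * K (x - y)"
            using g1 g2 by (intro add_mono mult_left_mono) auto
          also have "\<dots> \<le> B y" unfolding B_def using \<eta>0 Gn by simp
          finally show ?thesis unfolding lhs .
        qed
      qed
      have "norm (J n - complex_of_real (2*pi) * f x) \<le> (LINT y|lborel. norm ((f y - f x) * complex_of_real (G en (x - y))))"
        unfolding Jeq by (rule integral_norm_bound)
      also have "\<dots> \<le> (LINT y|lborel. B y)"
      proof (rule integral_mono)
        show "integrable lborel (\<lambda>y. norm ((f y - f x) * complex_of_real (G en (x - y))))"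
          using fGint Gint by (simp add: left_diff_distrib)
        show "integrable lborel B" by (rule Bint)
        show "\<And>y. y \<in> space lborel \<Longrightarrow> norm ((f y - f x) * complex_of_real (G en (x - y))) \<le> B y" using ptw by simp
      qed
      also have "\<dots> = r/2 + (L1 * s n + norm (f x) * T n)" unfolding Bintegral by (simp add: \<eta>_def)
      also have "\<dots> < r" using N[OF nN] by simp
      finally show "norm (J n - complex_of_real (2*pi) * f x) < r" .
    qed
  qed
  have "I = complex_of_real (2*pi) * f x"
    using LIMSEQ_unique[OF limA] limB eqJ by simp
  then show ?thesis unfolding inv_fourier_def I_def by simp
qed

definition cnv :: "(real \<Rightarrow> complex) \<Rightarrow> (real \<Rightarrow> complex) \<Rightarrow> real \<Rightarrow> complex" where
  "cnv f g \<xi> = (LINT \<eta>|lborel. f \<eta> * g (\<xi> - \<eta>))"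

lemma cnv_prod_integrable:
  fixes f g :: "real \<Rightarrow> complex"
  assumes fi: "integrable lborel f" and gi: "integrable lborel g"
  shows "integrable (lborel \<Otimes>\<^sub>M lborel) (\<lambda>(\<eta>, \<xi>). f \<eta> * g (\<xi> - \<eta>))"
proof (rule lborel_pair.Fubini_integrable)
  have [measurable]: "f \<in> borel_measurable lborel" "g \<in> borel_measurable lborel" using fi gi by auto
  show "(\<lambda>(\<eta>, \<xi>). f \<eta> * g (\<xi> - \<eta>)) \<in> borel_measurable (lborel \<Otimes>\<^sub>M lborel)" by measurable
  have "(LINT \<xi>|lborel. norm (f \<eta> * g (\<xi> - \<eta>))) = norm (f \<eta>) * (LINT \<xi>|lborel. norm (g \<xi>))" for \<eta>
    by (simp add: norm_mult integral_shift'[of "\<lambda>\<xi>. norm (g \<xi>)"])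
  moreover have "integrable lborel (\<lambda>\<eta>. norm (f \<eta>) * (LINT \<xi>|lborel. norm (g \<xi>)))" using fi by simp
  ultimately show "integrable lborel (\<lambda>\<eta>. LINT \<xi>|lborel. norm (case (\<eta>, \<xi>) of (\<eta>, \<xi>) \<Rightarrow> f \<eta> * g (\<xi> - \<eta>)))"
    by simp
  show "AE \<eta> in lborel. integrable lborel (\<lambda>\<xi>. case (\<eta>, \<xi>) of (\<eta>, \<xi>) \<Rightarrow> f \<eta> * g (\<xi> - \<eta>))"
  proof (intro AE_I2)
    fix \<eta>
    have "integrable lborel (\<lambda>\<xi>. g (\<xi> - \<eta>))" using gi integrable_shift'[of g \<eta>] by simp
    then show "integrable lborel (\<lambda>\<xi>. case (\<eta>, \<xi>) of (\<eta>, \<xi>) \<Rightarrow> f \<eta> * g (\<xi> - \<eta>))"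
      by simp
  qed
qed

lemma cnv_integrable:
  fixes f g :: "real \<Rightarrow> complex"
  assumes fi: "integrable lborel f" and gi: "integrable lborel g"
  shows "integrable lborel (cnv f g)"
  using lborel_pair.integrable_snd[OF cnv_prod_integrable[OF fi gi]]
  unfolding cnv_def[abs_def] by simp

lemma inv_fourier_product:
  fixes f g :: "real \<Rightarrow> complex"
  assumes fi: "integrable lborel f" and gi: "integrable lborel g"
  shows "inv_fourier f x * inv_fourier g x = inv_fourier (\<lambda>\<xi>. cnv f g \<xi> / complex_of_real (2*pi)) x"
proof -
  have [measurable]: "f \<in> borel_measurable lborel" "g \<in> borel_measurable lborel" using fi gi by auto
  have Hi: "integrable (lborel \<Otimes>\<^sub>M lborel) (\<lambda>(\<eta>, \<xi>). f \<eta> * g (\<xi> - \<eta>))"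
    using cnv_prod_integrable[OF fi gi] .
  have H'i: "integrable (lborel \<Otimes>\<^sub>M lborel) (\<lambda>(\<eta>, \<xi>). f \<eta> * g (\<xi> - \<eta>) * cis (x*\<xi>))"
  proof (rule Bochner_Integration.integrable_bound[OF Hi])
    show "(\<lambda>(\<eta>, \<xi>). f \<eta> * g (\<xi> - \<eta>) * cis (x*\<xi>)) \<in> borel_measurable (lborel \<Otimes>\<^sub>M lborel)"
      by measurable
    show "AE p in lborel \<Otimes>\<^sub>M lborel. norm ((\<lambda>(\<eta>, \<xi>). f \<eta> * g (\<xi> - \<eta>) * cis (x*\<xi>)) p) \<le> norm ((\<lambda>(\<eta>, \<xi>). f \<eta> * g (\<xi> - \<eta>)) p)"
      by (intro AE_I2) (simp add: norm_mult split: prod.splits)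
  qed
  have "(LINT \<eta>|lborel. f \<eta> * cis (x*\<eta>)) * (LINT \<zeta>|lborel. g \<zeta> * cis (x*\<zeta>))
      = (LINT \<eta>|lborel. f \<eta> * cis (x*\<eta>) * (LINT \<zeta>|lborel. g \<zeta> * cis (x*\<zeta>)))"
    by (rule integral_mult_left_zero[symmetric])
  also have "\<dots> = (LINT \<eta>|lborel. LINT \<xi>|lborel. f \<eta> * g (\<xi> - \<eta>) * cis (x*\<xi>))"
  proof (rule Bochner_Integration.integral_cong[OF refl])
    fix \<eta>
    have "(LINT \<zeta>|lborel. g \<zeta> * cis (x*\<zeta>)) = (LINT \<xi>|lborel. g (\<xi> - \<eta>) * cis (x*(\<xi> - \<eta>)))"
      using integral_shift'[of "\<lambda>\<zeta>. g \<zeta> * cis (x*\<zeta>)" \<eta>] by simp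
    then have "f \<eta> * cis (x*\<eta>) * (LINT \<zeta>|lborel. g \<zeta> * cis (x*\<zeta>)) = (LINT \<xi>|lborel. f \<eta> * cis (x*\<eta>) * (g (\<xi> - \<eta>) * cis (x*(\<xi> - \<eta>))))"
      by (simp add: integral_mult_right_zero)
    also have "\<dots> = (LINT \<xi>|lborel. f \<eta> * g (\<xi> - \<eta>) * cis (x*\<xi>))"
    proof (rule Bochner_Integration.integral_cong[OF refl])
      fix \<xi>
      have "cis (x*\<eta>) * cis (x*(\<xi> - \<eta>)) = cis (x*\<xi>)" by (simp add: cis_mult algebra_simps)
      then show "f \<eta> * cis (x*\<eta>) * (g (\<xi> - \<eta>) * cis (x*(\<xi> - \<eta>))) = f \<eta> * g (\<xi> - \<eta>) * cis (x*\<xi>)"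
        by (metis (no_types, lifting) mult.assoc mult.left_commute)
    qed
    finally show "f \<eta> * cis (x*\<eta>) * (LINT \<zeta>|lborel. g \<zeta> * cis (x*\<zeta>)) = (LINT \<xi>|lborel. f \<eta> * g (\<xi> - \<eta>) * cis (x*\<xi>))" .
  qed
  also have "\<dots> = (LINT \<xi>|lborel. LINT \<eta>|lborel. f \<eta> * g (\<xi> - \<eta>) * cis (x*\<xi>))"
    using lborel_pair.Fubini_integral[of "\<lambda>\<eta> \<xi>. f \<eta> * g (\<xi> - \<eta>) * cis (x*\<xi>)"] H'i by simp
  also have "\<dots> = (LINT \<xi>|lborel. cnv f g \<xi> * cis (x*\<xi>))"
    unfolding cnv_def by (simp add: integral_mult_left_zero)
  finally have eq: "(LINT \<eta>|lborel. f \<eta> * cis (x*\<eta>)) * (LINT \<zeta>|lborel. g \<zeta> * cis (x*\<zeta>)) = (LINT \<xi>|lborel. cnv f g \<xi> * cis (x*\<xi>))" .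
  have "(LINT \<xi>|lborel. cnv f g \<xi> / complex_of_real (2*pi) * cis (x*\<xi>)) = (LINT \<xi>|lborel. (cnv f g \<xi> * cis (x*\<xi>)) / complex_of_real (2*pi))"
    by (rule Bochner_Integration.integral_cong) auto
  also have "\<dots> = (LINT \<xi>|lborel. cnv f g \<xi> * cis (x*\<xi>)) / complex_of_real (2*pi)"
    by (rule integral_divide_zero)
  finally have "inv_fourier (\<lambda>\<xi>. cnv f g \<xi> / complex_of_real (2*pi)) x = (LINT \<xi>|lborel. cnv f g \<xi> * cis (x*\<xi>)) / complex_of_real (2*pi) / complex_of_real (2*pi)"
    unfolding inv_fourier_def by simp
  then show ?thesis unfolding inv_fourier_def eq[symmetric] by simp
qed


lemma cis_bound1: "cmod (cis t - 1) \<le> \<bar>t\<bar>"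
  using iexp_approx1[of t 0] by (simp add: cis_conv_exp)

lemma cis_bound2: "cmod (cis t - 1 - \<i> * complex_of_real t) \<le> t\<^sup>2 / 2"
proof -
  have "(\<Sum>k\<le>Suc 0. (\<i> * complex_of_real t) ^ k / fact k) = 1 + \<i> * complex_of_real t" by simp
  then show ?thesis using iexp_approx1[of t 1] by (simp add: cis_conv_exp diff_diff_eq power2_eq_square)
qed

lemma cis_bound3: "cmod (cis t - 1 - \<i> * complex_of_real t) \<le> 2 * \<bar>t\<bar>"
proof -
  have "cmod (cis t - 1 - \<i> * complex_of_real t) \<le> cmod (cis t - 1) + cmod (\<i> * complex_of_real t)"
    by (rule norm_triangle_ineq4)
  also have "\<dots> \<le> \<bar>t\<bar> + \<bar>t\<bar>" using cis_bound1[of t] by (simp add: norm_mult)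
  finally show ?thesis by simp
qed

lemma inv_fourier_deriv:
  fixes f :: "real \<Rightarrow> complex"
  assumes fi: "integrable lborel f" and fi1: "integrable lborel (\<lambda>\<xi>. complex_of_real \<xi> * f \<xi>)"
  shows "(inv_fourier f has_vector_derivative inv_fourier (\<lambda>\<xi>. \<i> * complex_of_real \<xi> * f \<xi>) x) (at x)"
proof -
  have [measurable]: "f \<in> borel_measurable lborel" using fi by auto
  define F where "F = (\<lambda>x. LINT \<xi>|lborel. f \<xi> * cis (x*\<xi>))"
  define F' where "F' = (LINT \<xi>|lborel. \<i> * complex_of_real \<xi> * f \<xi> * cis (x*\<xi>))"
  define k where "k = (\<lambda>h \<xi>. cis (h*\<xi>) - 1 - \<i> * complex_of_real (h*\<xi>))"
  have int_cis: "integrable lborel (\<lambda>\<xi>. f \<xi> * cis (y*\<xi>))" for y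
    using fi by (rule Bochner_Integration.integrable_bound) (auto simp: norm_mult)
  have int_cis1: "integrable lborel (\<lambda>\<xi>. \<i> * complex_of_real \<xi> * f \<xi> * cis (x*\<xi>))"
    using fi1 by (rule Bochner_Integration.integrable_bound) (auto simp: norm_mult)
  have ident: "F (x + h) - F x - h *\<^sub>R F' = (LINT \<xi>|lborel. f \<xi> * cis (x*\<xi>) * k h \<xi>)" for h
  proof -
    have "F (x + h) - F x - h *\<^sub>R F' = (LINT \<xi>|lborel. f \<xi> * cis ((x+h)*\<xi>) - f \<xi> * cis (x*\<xi>) - h *\<^sub>R (\<i> * complex_of_real \<xi> * f \<xi> * cis (x*\<xi>)))"
      unfolding F_def F'_def
      by (subst Bochner_Integration.integral_diff, (intro Bochner_Integration.integrable_diff integrable_scaleR_right int_cis int_cis1)+,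
          subst Bochner_Integration.integral_diff, (intro int_cis)+, simp)
    also have "\<dots> = (LINT \<xi>|lborel. f \<xi> * cis (x*\<xi>) * k h \<xi>)"
    proof (rule Bochner_Integration.integral_cong[OF refl])
      fix \<xi>
      have "cis ((x+h)*\<xi>) = cis (x*\<xi>) * cis (h*\<xi>)" by (simp add: cis_mult distrib_right)
      then show "f \<xi> * cis ((x+h)*\<xi>) - f \<xi> * cis (x*\<xi>) - h *\<^sub>R (\<i> * complex_of_real \<xi> * f \<xi> * cis (x*\<xi>)) = f \<xi> * cis (x*\<xi>) * k h \<xi>"
        unfolding k_def by (simp add: scaleR_conv_of_real algebra_simps)
    qed
    finally show ?thesis .
  qed
  define Q where "Q = (\<lambda>h. LINT \<xi>|lborel. norm (f \<xi>) * (norm (k h \<xi>) / \<bar>h\<bar>))"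
  have Qbound: "norm (F (x + h) - F x - h *\<^sub>R F') / norm h \<le> Q h" if "h \<noteq> 0" for h
  proof -
    have "norm (F (x + h) - F x - h *\<^sub>R F') \<le> (LINT \<xi>|lborel. norm (f \<xi> * cis (x*\<xi>) * k h \<xi>))"
      unfolding ident by (rule integral_norm_bound)
    also have "\<dots> = (LINT \<xi>|lborel. norm (f \<xi>) * (norm (k h \<xi>) / \<bar>h\<bar>)) * \<bar>h\<bar>"
      using that by (subst integral_mult_left_zero[symmetric]) (simp add: norm_mult)
    finally show ?thesis using that by (simp add: Q_def divide_simps)
  qed
  have Qlim: "(Q \<longlongrightarrow> 0) (at 0)"
    unfolding tendsto_at_iff_sequentially
  proof (intro allI impI)
    fix X :: "nat \<Rightarrow> real" assume X0: "\<forall>i. X i \<in> UNIV - {0}" and Xl: "X \<longlonglongrightarrow> 0"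
    define z :: "real \<Rightarrow> real" where "z = (\<lambda>_. 0)"
    have "(\<lambda>n. LINT \<xi>|lborel. norm (f \<xi>) * (norm (k (X n) \<xi>) / \<bar>X n\<bar>)) \<longlonglongrightarrow> integral\<^sup>L lborel z"
    proof (rule integral_dominated_convergence[where w = "\<lambda>\<xi>. 2 * norm (complex_of_real \<xi> * f \<xi>)"])
      show "z \<in> borel_measurable lborel" by (simp add: z_def)
      show "(\<lambda>\<xi>. norm (f \<xi>) * (norm (k (X n) \<xi>) / \<bar>X n\<bar>)) \<in> borel_measurable lborel" for n
        unfolding k_def by measurable
      show "integrable lborel (\<lambda>\<xi>. 2 * norm (complex_of_real \<xi> * f \<xi>))" using fi1 by simp
      show "AE \<xi> in lborel. (\<lambda>n. norm (f \<xi>) * (norm (k (X n) \<xi>) / \<bar>X n\<bar>)) \<longlonglongrightarrow> z \<xi>"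
      proof (intro AE_I2)
        fix \<xi>
        have b: "norm (norm (f \<xi>) * (norm (k (X n) \<xi>) / \<bar>X n\<bar>)) \<le> norm (f \<xi>) * \<xi>\<^sup>2 / 2 * \<bar>X n\<bar>" for n
        proof -
          have Xn: "X n \<noteq> 0" using X0 by auto
          have "norm (k (X n) \<xi>) \<le> (X n * \<xi>)\<^sup>2 / 2" unfolding k_def by (rule cis_bound2)
          then have "norm (k (X n) \<xi>) / \<bar>X n\<bar> \<le> (X n * \<xi>)\<^sup>2 / 2 / \<bar>X n\<bar>"
            by (rule divide_right_mono) simp
          also have "\<dots> = \<xi>\<^sup>2 / 2 * \<bar>X n\<bar>" using Xn
            by (simp add: power2_eq_square field_simps)
          finally have "norm (k (X n) \<xi>) / \<bar>X n\<bar> \<le> \<xi>\<^sup>2 / 2 * \<bar>X n\<bar>" .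
          then have "norm (f \<xi>) * (norm (k (X n) \<xi>) / \<bar>X n\<bar>) \<le> norm (f \<xi>) * (\<xi>\<^sup>2 / 2 * \<bar>X n\<bar>)"
            by (rule mult_left_mono) simp
          then show ?thesis by (simp add: mult.assoc)
        qed
        have "(\<lambda>n. norm (f \<xi>) * \<xi>\<^sup>2 / 2 * \<bar>X n\<bar>) \<longlonglongrightarrow> norm (f \<xi>) * \<xi>\<^sup>2 / 2 * \<bar>0\<bar>"
          by (intro tendsto_intros Xl)
        then have "(\<lambda>n. norm (f \<xi>) * \<xi>\<^sup>2 / 2 * \<bar>X n\<bar>) \<longlonglongrightarrow> 0" by simp
        then show "(\<lambda>n. norm (f \<xi>) * (norm (k (X n) \<xi>) / \<bar>X n\<bar>)) \<longlonglongrightarrow> z \<xi>"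
          unfolding z_def by (rule Lim_null_comparison[rotated]) (use b in auto)
      qed
      show "AE \<xi> in lborel. norm (norm (f \<xi>) * (norm (k (X n) \<xi>) / \<bar>X n\<bar>)) \<le> 2 * norm (complex_of_real \<xi> * f \<xi>)" for n
      proof (intro AE_I2)
        fix \<xi>
        have Xn: "X n \<noteq> 0" using X0 by auto
        have "norm (k (X n) \<xi>) \<le> 2 * \<bar>X n * \<xi>\<bar>" unfolding k_def by (rule cis_bound3)
        then have "norm (k (X n) \<xi>) / \<bar>X n\<bar> \<le> 2 * \<bar>\<xi>\<bar>" using Xn
          by (simp add: divide_simps abs_mult) (simp add: algebra_simps)
        then have "norm (f \<xi>) * (norm (k (X n) \<xi>) / \<bar>X n\<bar>) \<le> norm (f \<xi>) * (2 * \<bar>\<xi>\<bar>)"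
          by (rule mult_left_mono) simp
        then show "norm (norm (f \<xi>) * (norm (k (X n) \<xi>) / \<bar>X n\<bar>)) \<le> 2 * norm (complex_of_real \<xi> * f \<xi>)"
          by (simp add: norm_mult algebra_simps)
      qed
    qed
    then show "(Q \<circ> X) \<longlonglongrightarrow> 0" by (simp add: Q_def o_def z_def)
  qed
  have "(F has_derivative (\<lambda>h. h *\<^sub>R F')) (at x)"
    unfolding has_derivative_at
  proof
    show "bounded_linear (\<lambda>h. h *\<^sub>R F')" by (rule bounded_linear_scaleR_left)
    show "((\<lambda>h. norm (F (x + h) - F x - h *\<^sub>R F') / norm h) \<longlongrightarrow> 0) (at 0)"
    proof (rule Lim_null_comparison[OF _ Qlim])
      show "\<forall>\<^sub>F h in at 0. norm (norm (F (x + h) - F x - h *\<^sub>R F') / norm h) \<le> Q h"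
        unfolding eventually_at_filter by (intro always_eventually) (use Qbound in \<open>auto simp: real_norm_def\<close>)
    qed
  qed
  then have "(F has_vector_derivative F') (at x)" unfolding has_vector_derivative_def .
  then have "((\<lambda>x. F x / complex_of_real (2*pi)) has_vector_derivative F' / complex_of_real (2*pi)) (at x)"
    by (rule has_vector_derivative_divide)
  moreover have "(\<lambda>x. F x / complex_of_real (2*pi)) = inv_fourier f"
    unfolding F_def inv_fourier_def by (simp add: fun_eq_iff)
  moreover have "F' / complex_of_real (2*pi) = inv_fourier (\<lambda>\<xi>. \<i> * complex_of_real \<xi> * f \<xi>) x"
    unfolding F'_def inv_fourier_def by simp
  ultimately show ?thesis by simp
qed

lemma borel_measurable_cnj'[measurable (raw)]:
  "f \<in> borel_measurable M \<Longrightarrow> (\<lambda>x. cnj (f x)) \<in> borel_measurable M"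
proof -
  have "cnj \<in> borel_measurable borel"
    by (intro borel_measurable_continuous_onI continuous_on_cnj continuous_on_id)
  moreover assume "f \<in> borel_measurable M"
  ultimately show ?thesis using measurable_compose by blast
qed

lemma amgm2: "2 * ((a::real) * b) \<le> a\<^sup>2 + b\<^sup>2"
proof -
  have "0 \<le> (a - b)\<^sup>2" by simp
  then show ?thesis unfolding power2_diff by simp
qed

lemma inv_fourier_bound:
  assumes "integrable lborel h"
  shows "norm (inv_fourier h x) \<le> (LINT \<xi>|lborel. norm (h \<xi>)) / (2*pi)"
proof -
  have "norm (LINT \<xi>|lborel. h \<xi> * cis (x*\<xi>)) \<le> (LINT \<xi>|lborel. norm (h \<xi> * cis (x*\<xi>)))"
    by (rule integral_norm_bound)
  also have "\<dots> = (LINT \<xi>|lborel. norm (h \<xi>))" by (simp add: norm_mult)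
  finally show ?thesis unfolding inv_fourier_def by (simp add: norm_divide divide_right_mono)
qed

lemma inv_fourier_cnj:
  "cnj (inv_fourier h x) = inv_fourier (\<lambda>\<xi>. cnj (h (-\<xi>))) x"
proof -
  have "cnj (LINT \<xi>|lborel. h \<xi> * cis (x*\<xi>)) = (LINT \<xi>|lborel. cnj (h \<xi> * cis (x*\<xi>)))"
    by (rule Bochner_Integration.integral_cnj[symmetric])
  also have "\<dots> = (LINT \<xi>|lborel. cnj (h \<xi>) * cis (-(x*\<xi>)))"
    by (simp add: cis_cnj)
  also have "\<dots> = (LINT \<xi>|lborel. cnj (h (-\<xi>)) * cis (x*\<xi>))"
    using integral_reflect[of "\<lambda>\<xi>. cnj (h \<xi>) * cis (-(x*\<xi>))"] by simp
  finally show ?thesis unfolding inv_fourier_def by simp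
qed

lemma inv_fourier_as_fourier:
  "inv_fourier k x = fourier k (-x) / complex_of_real (2*pi)"
  unfolding inv_fourier_def fourier_def by (simp add: mult.commute)

lemma inv_fourier_L2:
  fixes h :: "real \<Rightarrow> complex"
  assumes hi: "integrable lborel h" and hb: "\<And>\<xi>. norm (h \<xi>) \<le> Bd"
    and Fm: "inv_fourier h \<in> borel_measurable lborel"
  shows "integrable lborel (\<lambda>x. (cmod (inv_fourier h x))\<^sup>2)"
proof -
  have [measurable]: "h \<in> borel_measurable lborel" using hi by auto
  have Bd0: "Bd \<ge> 0" using hb[of 0] norm_ge_zero[of "h 0"] by linarith
  define F where "F = inv_fourier h"
  define ht where "ht = (\<lambda>\<xi>. cnj (h (-\<xi>)))"
  have hti: "integrable lborel ht"
    unfolding ht_def using hi integrable_reflect[of h] by (simp add: integrable_cnj)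
  define k where "k = (\<lambda>\<xi>. cnv h ht \<xi> / complex_of_real (2*pi))"
  have ki: "integrable lborel k" unfolding k_def using cnv_integrable[OF hi hti] by simp
  have h2i: "integrable lborel (\<lambda>\<xi>. (norm (h \<xi>))\<^sup>2)"
  proof -
    have "integrable lborel (\<lambda>\<xi>. Bd * norm (h \<xi>))" using hi by simp
    then show ?thesis
    proof (rule Bochner_Integration.integrable_bound)
      show "(\<lambda>\<xi>. (norm (h \<xi>))\<^sup>2) \<in> borel_measurable lborel" by measurable
      show "AE \<xi> in lborel. norm ((norm (h \<xi>))\<^sup>2) \<le> norm (Bd * norm (h \<xi>))"
        by (intro AE_I2) (simp add: power2_eq_square abs_mult Bd0 mult_right_mono hb)
    qed
  qed
  define C where "C = (LINT \<xi>|lborel. (norm (h \<xi>))\<^sup>2) / (2*pi)"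
  have kb: "norm (k y) \<le> C" for y
  proof -
    have i1: "integrable lborel (\<lambda>\<eta>. (norm (h (\<eta> - y)))\<^sup>2)" using h2i integrable_shift'[of "\<lambda>\<eta>. (norm (h \<eta>))\<^sup>2" y] by simp
    have "norm (cnv h ht y) \<le> (LINT \<eta>|lborel. norm (h \<eta> * ht (y - \<eta>)))"
      unfolding cnv_def by (rule integral_norm_bound)
    also have "\<dots> \<le> (LINT \<eta>|lborel. ((norm (h \<eta>))\<^sup>2 + (norm (h (\<eta> - y)))\<^sup>2) / 2)"
    proof (rule integral_mono)
      show "integrable lborel (\<lambda>\<eta>. ((norm (h \<eta>))\<^sup>2 + (norm (h (\<eta> - y)))\<^sup>2) / 2)"
        using h2i i1 by simp
      show "integrable lborel (\<lambda>\<eta>. norm (h \<eta> * ht (y - \<eta>)))"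
      proof (rule Bochner_Integration.integrable_bound)
        show "integrable lborel (\<lambda>\<eta>. ((norm (h \<eta>))\<^sup>2 + (norm (h (\<eta> - y)))\<^sup>2) / 2)"
          using h2i i1 by simp
        show "(\<lambda>\<eta>. norm (h \<eta> * ht (y - \<eta>))) \<in> borel_measurable lborel" unfolding ht_def by measurable
        show "AE \<eta> in lborel. norm (norm (h \<eta> * ht (y - \<eta>))) \<le> norm (((norm (h \<eta>))\<^sup>2 + (norm (h (\<eta> - y)))\<^sup>2) / 2)"
        proof (intro AE_I2)
          fix \<eta>
          have "2 * (norm (h \<eta>) * norm (h (\<eta> - y))) \<le> (norm (h \<eta>))\<^sup>2 + (norm (h (\<eta> - y)))\<^sup>2"
            by (rule amgm2)
          then show "norm (norm (h \<eta> * ht (y - \<eta>))) \<le> norm (((norm (h \<eta>))\<^sup>2 + (norm (h (\<eta> - y)))\<^sup>2) / 2)"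
            unfolding ht_def by (simp add: norm_mult)
        qed
      qed
      show "\<And>\<eta>. \<eta> \<in> space lborel \<Longrightarrow> norm (h \<eta> * ht (y - \<eta>)) \<le> ((norm (h \<eta>))\<^sup>2 + (norm (h (\<eta> - y)))\<^sup>2) / 2"
      proof -
        fix \<eta>
        have "2 * (norm (h \<eta>) * norm (h (\<eta> - y))) \<le> (norm (h \<eta>))\<^sup>2 + (norm (h (\<eta> - y)))\<^sup>2"
          by (rule amgm2)
        then show "norm (h \<eta> * ht (y - \<eta>)) \<le> ((norm (h \<eta>))\<^sup>2 + (norm (h (\<eta> - y)))\<^sup>2) / 2"
          unfolding ht_def by (simp add: norm_mult)
      qed
    qed
    also have "\<dots> = ((LINT \<eta>|lborel. (norm (h \<eta>))\<^sup>2) + (LINT \<eta>|lborel. (norm (h (\<eta> - y)))\<^sup>2)) / 2"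
      using h2i i1 by simp
    also have "\<dots> = (LINT \<eta>|lborel. (norm (h \<eta>))\<^sup>2)"
      using integral_shift'[of "\<lambda>\<eta>. (norm (h \<eta>))\<^sup>2" y] by simp
    finally show ?thesis unfolding k_def C_def by (simp add: norm_divide divide_right_mono)
  qed
  have C0: "C \<ge> 0" using kb[of 0] norm_ge_zero[of "k 0"] by linarith
  have Fsq: "complex_of_real ((cmod (F x))\<^sup>2) = inv_fourier k x" for x
    unfolding complex_norm_square F_def inv_fourier_cnj k_def ht_def
    by (rule inv_fourier_product[OF hi]) (use hti in \<open>simp add: ht_def\<close>)
  define M1 where "M1 = (LINT \<xi>|lborel. norm (h \<xi>)) / (2*pi)"
  have Fb: "norm (F x) \<le> M1" for x unfolding F_def M1_def by (rule inv_fourier_bound[OF hi])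
  have M10: "M1 \<ge> 0" using Fb[of 0] norm_ge_zero[of "F 0"] by linarith
  have intE: "integrable lborel (\<lambda>x. (cmod (F x))\<^sup>2 * exp (-e*x\<^sup>2))" if e: "e > 0" for e
  proof -
    have "integrable lborel (\<lambda>x. M1\<^sup>2 * exp (-e*x\<^sup>2))" using int_gauss[OF e] by simp
    then show ?thesis
    proof (rule Bochner_Integration.integrable_bound)
      show "(\<lambda>x. (cmod (F x))\<^sup>2 * exp (-e*x\<^sup>2)) \<in> borel_measurable lborel" using Fm unfolding F_def by measurable
      show "AE x in lborel. norm ((cmod (F x))\<^sup>2 * exp (-e*x\<^sup>2)) \<le> norm (M1\<^sup>2 * exp (-e*x\<^sup>2))"
      proof (intro AE_I2)
        fix x
        have "(cmod (F x))\<^sup>2 \<le> M1\<^sup>2" using Fb[of x] by (simp add: power_mono)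
        then show "norm ((cmod (F x))\<^sup>2 * exp (-e*x\<^sup>2)) \<le> norm (M1\<^sup>2 * exp (-e*x\<^sup>2))"
          by (simp add: abs_mult mult_right_mono)
      qed
    qed
  qed
  have bndE: "(LINT x|lborel. (cmod (F x))\<^sup>2 * exp (-e*x\<^sup>2)) \<le> C" if e: "e > 0" for e
  proof -
    have "complex_of_real (LINT x|lborel. (cmod (F x))\<^sup>2 * exp (-e*x\<^sup>2))
        = (LINT x|lborel. complex_of_real ((cmod (F x))\<^sup>2 * exp (-e*x\<^sup>2)))"
      by (rule integral_complex_of_real[symmetric])
    also have "\<dots> = (LINT x|lborel. inv_fourier k x * complex_of_real (exp (-e*x\<^sup>2)))"
    proof (rule Bochner_Integration.integral_cong[OF refl])
      fix x
      show "complex_of_real ((cmod (F x))\<^sup>2 * exp (-e*x\<^sup>2)) = inv_fourier k x * complex_of_real (exp (-e*x\<^sup>2))"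
        unfolding of_real_mult Fsq ..
    qed
    also have "\<dots> = (LINT x|lborel. fourier k (-x) * complex_of_real (exp (-e*(-x)\<^sup>2)) / complex_of_real (2*pi))"
    proof (rule Bochner_Integration.integral_cong[OF refl])
      fix x
      show "inv_fourier k x * complex_of_real (exp (-e*x\<^sup>2)) = fourier k (-x) * complex_of_real (exp (-e*(-x)\<^sup>2)) / complex_of_real (2*pi)"
        unfolding inv_fourier_as_fourier by simp
    qed
    also have "\<dots> = (LINT x|lborel. fourier k (-x) * complex_of_real (exp (-e*(-x)\<^sup>2))) / complex_of_real (2*pi)"
      by (rule integral_divide_zero)
    also have "(LINT x|lborel. fourier k (-x) * complex_of_real (exp (-e*(-x)\<^sup>2))) = (LINT x|lborel. fourier k x * complex_of_real (exp (-e*x\<^sup>2)))"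
      by (rule integral_reflect)
    also have "\<dots> = (LINT x|lborel. fourier k x * cis (0*x) * complex_of_real (exp (-e*x\<^sup>2)))" by simp
    also have "\<dots> = (LINT y|lborel. k y * complex_of_real (G e (0 - y)))"
      by (rule gauss_fubini[OF ki e])
    finally have eq: "complex_of_real (LINT x|lborel. (cmod (F x))\<^sup>2 * exp (-e*x\<^sup>2)) = (LINT y|lborel. k y * complex_of_real (G e (0 - y))) / complex_of_real (2*pi)" .
    have "norm (LINT y|lborel. k y * complex_of_real (G e (0 - y))) \<le> (LINT y|lborel. norm (k y * complex_of_real (G e (0 - y))))"
      by (rule integral_norm_bound)
    also have "\<dots> \<le> (LINT y|lborel. C * G e (0 - y))"
    proof (rule integral_mono)
      show "integrable lborel (\<lambda>y. C * G e (0 - y))" using G_shift_integrable[OF e, of 0] by simp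
      show "integrable lborel (\<lambda>y. norm (k y * complex_of_real (G e (0 - y))))"
      proof (rule Bochner_Integration.integrable_bound)
        show "integrable lborel (\<lambda>y. C * G e (0 - y))" using G_shift_integrable[OF e, of 0] by simp
        show "(\<lambda>y. norm (k y * complex_of_real (G e (0 - y)))) \<in> borel_measurable lborel" using ki by measurable
        show "AE y in lborel. norm (norm (k y * complex_of_real (G e (0 - y)))) \<le> norm (C * G e (0 - y))"
          by (intro AE_I2) (simp add: norm_mult abs_mult G_nonneg[OF e] mult_right_mono kb C0)
      qed
      show "\<And>y. y \<in> space lborel \<Longrightarrow> norm (k y * complex_of_real (G e (0 - y))) \<le> C * G e (0 - y)"
        by (simp add: norm_mult abs_mult G_nonneg[OF e] mult_right_mono kb)
    qed
    also have "\<dots> = C * (2*pi)" using G_shift_integral[OF e, of 0] by simp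
    finally have "norm (LINT y|lborel. k y * complex_of_real (G e (0 - y))) \<le> C * (2*pi)" .
    then have "norm (complex_of_real (LINT x|lborel. (cmod (F x))\<^sup>2 * exp (-e*x\<^sup>2))) \<le> C"
      unfolding eq by (simp add: norm_divide divide_simps)
    then show ?thesis by simp
  qed
  define fn where "fn = (\<lambda>(n::nat) x. (cmod (F x))\<^sup>2 * exp (-(1/real (Suc n))*x\<^sup>2))"
  have fni: "integrable lborel (fn n)" for n unfolding fn_def by (rule intE) simp
  have fnmono: "fn n x \<le> fn (Suc n) x" for n x
  proof -
    have "1/real (Suc (Suc n)) \<le> 1/real (Suc n)" by (simp add: frac_le)
    then have "(1/real (Suc (Suc n)))*x\<^sup>2 \<le> (1/real (Suc n))*x\<^sup>2"
      by (rule mult_right_mono) simp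
    then have "-(1/real (Suc n))*x\<^sup>2 \<le> -(1/real (Suc (Suc n)))*x\<^sup>2"
      by linarith
    then show ?thesis unfolding fn_def by (intro mult_left_mono) auto
  qed
  have intmono: "incseq (\<lambda>n. integral\<^sup>L lborel (fn n))"
    by (intro incseq_SucI integral_mono fni) (auto simp: fnmono)
  have intbdd: "bdd_above (range (\<lambda>n. integral\<^sup>L lborel (fn n)))"
  proof (intro bdd_aboveI[where M = C])
    fix y assume "y \<in> range (\<lambda>n. integral\<^sup>L lborel (fn n))"
    then obtain n where "y = integral\<^sup>L lborel (fn n)" by auto
    then show "y \<le> C" unfolding fn_def using bndE[of "1/real (Suc n)"] by simp
  qed
  have "integrable lborel (\<lambda>x. (cmod (F x))\<^sup>2)"
  proof (rule integral_monotone_convergence_nonneg)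
    show "\<And>i. integrable lborel (fn i)" by (rule fni)
    show "AE x in lborel. mono (\<lambda>n. fn n x)" by (intro AE_I2 monoI, rule lift_Suc_mono_le[of "\<lambda>n. fn n _"]) (use fnmono in auto)
    show "\<And>i. AE x in lborel. 0 \<le> fn i x" by (intro AE_I2) (simp add: fn_def)
    show "AE x in lborel. (\<lambda>i. fn i x) \<longlonglongrightarrow> (cmod (F x))\<^sup>2"
    proof (intro AE_I2)
      fix x
      have "(\<lambda>i. fn i x) \<longlonglongrightarrow> (cmod (F x))\<^sup>2 * exp (-0*x\<^sup>2)"
        unfolding fn_def by (intro tendsto_intros LIMSEQ_inverse_real_of_nat[unfolded inverse_eq_divide])
      then show "(\<lambda>i. fn i x) \<longlonglongrightarrow> (cmod (F x))\<^sup>2" by simp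
    qed
    show "(\<lambda>i. integral\<^sup>L lborel (fn i)) \<longlonglongrightarrow> (SUP n. integral\<^sup>L lborel (fn n))"
      by (rule LIMSEQ_incseq_SUP[OF intbdd intmono])
    show "(\<lambda>x. (cmod (F x))\<^sup>2) \<in> borel_measurable lborel" using Fm unfolding F_def by measurable
  qed
  then show ?thesis unfolding F_def .
qed

definition wt :: "real \<Rightarrow> real \<Rightarrow> real" where
  "wt c \<xi> = exp (- c * \<bar>\<xi>\<bar>)"

definition cbd :: "real \<Rightarrow> real \<Rightarrow> real \<Rightarrow> real \<Rightarrow> real" where
  "cbd R c A \<eta> = (if \<bar>\<eta>\<bar> \<le> R then A * wt c \<eta> else 0)"

lemma wt_pos: "wt c \<xi> > 0" by (simp add: wt_def)

lemma wt_le1: "c \<ge> 0 \<Longrightarrow> wt c \<xi> \<le> 1" by (simp add: wt_def)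

lemma wt_mult:
  assumes "c \<ge> 0"
  shows "wt c \<eta> * wt c (\<xi> - \<eta>) \<le> wt c \<xi>"
proof -
  have "\<bar>\<xi>\<bar> \<le> \<bar>\<eta>\<bar> + \<bar>\<xi> - \<eta>\<bar>" by linarith
  then have "c * \<bar>\<xi>\<bar> \<le> c * (\<bar>\<eta>\<bar> + \<bar>\<xi> - \<eta>\<bar>)"
    using assms by (intro mult_left_mono)
  then have "- c * \<bar>\<eta>\<bar> + - c * \<bar>\<xi> - \<eta>\<bar> \<le> - c * \<bar>\<xi>\<bar>"
    by (simp add: algebra_simps)
  then show ?thesis unfolding wt_def by (simp add: exp_add[symmetric])
qed

lemma wt_measurable[measurable (raw)]:
  "f \<in> borel_measurable M \<Longrightarrow> (\<lambda>x. wt c (f x)) \<in> borel_measurable M"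
  unfolding wt_def by measurable

lemma cbd_le: "A \<ge> 0 \<Longrightarrow> cbd R c A \<eta> \<le> A * wt c \<eta>"
  unfolding cbd_def using wt_pos[of c \<eta>] by auto

lemma cbd_nonneg: "A \<ge> 0 \<Longrightarrow> cbd R c A \<eta> \<ge> 0"
  unfolding cbd_def using wt_pos[of c \<eta>] by auto

lemma conv_est:
  fixes f g :: "real \<Rightarrow> complex"
  assumes fm: "f \<in> borel_measurable lborel" and gm: "g \<in> borel_measurable lborel"
    and c: "c \<ge> 0" and R: "R \<ge> 0" and A: "A \<ge> 0" and B: "B \<ge> 0"
    and fb: "\<And>\<eta>. cmod (f \<eta>) \<le> cbd R c A \<eta>" and gb: "\<And>\<xi>. cmod (g \<xi>) \<le> B * wt c \<xi>"
  shows "integrable lborel (\<lambda>\<eta>. f \<eta> * g (\<xi> - \<eta>))" and "cmod (cnv f g \<xi>) \<le> 2*R*A*B * wt c \<xi>"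
proof -
  have [measurable]: "f \<in> borel_measurable lborel" "g \<in> borel_measurable lborel" using fm gm by auto
  define K where "K = (\<lambda>\<eta>::real. A*B*wt c \<xi> * indicator {-R..R} \<eta>)"
  have Ki: "integrable lborel K"
  proof -
    have "integrable lborel (indicat_real {-R..R})"
      by (rule integrable_real_indicator) (auto simp: emeasure_lborel_Icc_eq)
    then show ?thesis unfolding K_def by simp
  qed
  have KI: "(LINT \<eta>|lborel. K \<eta>) = 2*R*A*B * wt c \<xi>"
  proof -
    have "(LINT \<eta>|lborel. K \<eta>) = A*B*wt c \<xi> * measure lborel {-R..R}"
      unfolding K_def by simp
    also have "measure lborel {-R..R} = 2*R" using R by (simp add: measure_lborel_Icc)
    finally show ?thesis by simp
  qed
  have pt: "cmod (f \<eta> * g (\<xi> - \<eta>)) \<le> K \<eta>" for \<eta>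
  proof (cases "\<bar>\<eta>\<bar> \<le> R")
    case True
    then have "cmod (f \<eta>) \<le> A * wt c \<eta>" using fb[of \<eta>] by (simp add: cbd_def)
    then have "cmod (f \<eta> * g (\<xi> - \<eta>)) \<le> (A * wt c \<eta>) * (B * wt c (\<xi> - \<eta>))"
      unfolding norm_mult by (intro mult_mono gb) (use A wt_pos[of c \<eta>] in auto)
    also have "\<dots> = A*B * (wt c \<eta> * wt c (\<xi> - \<eta>))" by simp
    also have "\<dots> \<le> A*B * wt c \<xi>" by (intro mult_left_mono wt_mult c) (use A B in simp)
    finally show ?thesis unfolding K_def using True by (simp add: indicator_def abs_le_iff)
  next
    case False
    then have "cmod (f \<eta>) \<le> 0" using fb[of \<eta>] by (simp add: cbd_def)
    then show ?thesis unfolding K_def using False by (auto simp: indicator_def abs_le_iff)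
  qed
  show ii: "integrable lborel (\<lambda>\<eta>. f \<eta> * g (\<xi> - \<eta>))"
    using Ki by (rule Bochner_Integration.integrable_bound) (auto intro!: AE_I2 order.trans[OF pt])
  have "cmod (cnv f g \<xi>) \<le> (LINT \<eta>|lborel. cmod (f \<eta> * g (\<xi> - \<eta>)))"
    unfolding cnv_def by (rule integral_norm_bound)
  also have "\<dots> \<le> (LINT \<eta>|lborel. K \<eta>)"
    using ii Ki pt by (intro integral_mono) auto
  finally show "cmod (cnv f g \<xi>) \<le> 2*R*A*B * wt c \<xi>" unfolding KI .
qed

lemma cnv_measurable[measurable]:
  assumes [measurable]: "f \<in> borel_measurable lborel" "g \<in> borel_measurable lborel"
  shows "cnv f g \<in> borel_measurable borel"
proof -
  have "(\<lambda>\<xi>. LINT \<eta>|lborel. f \<eta> * g (\<xi> - \<eta>)) \<in> borel_measurable borel" by measurable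
  then show ?thesis unfolding cnv_def[abs_def] .
qed

lemma cnv_diff:
  fixes f g f' g' :: "real \<Rightarrow> complex"
  assumes "integrable lborel (\<lambda>\<eta>. f \<eta> * g (\<xi> - \<eta>))" "integrable lborel (\<lambda>\<eta>. f' \<eta> * g' (\<xi> - \<eta>))"
    "integrable lborel (\<lambda>\<eta>. f' \<eta> * g (\<xi> - \<eta>))"
  shows "cnv f g \<xi> - cnv f' g' \<xi> = cnv (\<lambda>\<eta>. f \<eta> - f' \<eta>) g \<xi> + cnv f' (\<lambda>\<zeta>. g \<zeta> - g' \<zeta>) \<xi>"
proof -
  have "cnv (\<lambda>\<eta>. f \<eta> - f' \<eta>) g \<xi> = cnv f g \<xi> - cnv f' g \<xi>"
    unfolding cnv_def using assms by (simp add: left_diff_distrib)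
  moreover have "cnv f' (\<lambda>\<zeta>. g \<zeta> - g' \<zeta>) \<xi> = cnv f' g \<xi> - cnv f' g' \<xi>"
    unfolding cnv_def using assms by (simp add: right_diff_distrib)
  ultimately show ?thesis by simp
qed

primrec cpow :: "(real \<Rightarrow> complex) \<Rightarrow> nat \<Rightarrow> real \<Rightarrow> complex" where
  "cpow f 0 = f"
| "cpow f (Suc n) = (\<lambda>\<xi>. cnv f (cpow f n) \<xi> / complex_of_real (2*pi))"

lemma cpow_props:
  fixes f :: "real \<Rightarrow> complex"
  assumes fm: "f \<in> borel_measurable lborel" and fb: "\<And>\<eta>. cmod (f \<eta>) \<le> cbd R c B \<eta>"
    and c: "c \<ge> 0" and R: "R \<ge> 0" and B: "B \<ge> 0"
  shows "cpow f n \<in> borel_measurable lborel \<and> (\<forall>\<xi>. cmod (cpow f n \<xi>) \<le> B * (R*B/pi)^n * wt c \<xi>)"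
proof (induction n)
  case 0
  then show ?case using fm fb cbd_le[OF B] by (auto intro: order.trans[OF fb])
next
  case (Suc n)
  have [measurable]: "f \<in> borel_measurable lborel" using fm by simp
  have Pm[measurable]: "cpow f n \<in> borel_measurable lborel" using Suc by simp
  have Pb: "\<And>\<xi>. cmod (cpow f n \<xi>) \<le> (B * (R*B/pi)^n) * wt c \<xi>" using Suc by simp
  have B': "B * (R*B/pi)^n \<ge> 0" using B R by simp
  have "cmod (cpow f (Suc n) \<xi>) \<le> B * (R*B/pi)^Suc n * wt c \<xi>" for \<xi>
  proof -
    have "cmod (cnv f (cpow f n) \<xi>) \<le> 2*R*B*(B * (R*B/pi)^n) * wt c \<xi>"
      by (rule conv_est(2)[OF fm Pm c R B B' fb Pb])
    then have "cmod (cnv f (cpow f n) \<xi>) / (2*pi) \<le> 2*R*B*(B * (R*B/pi)^n) * wt c \<xi> / (2*pi)"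
      by (rule divide_right_mono) simp
    also have "\<dots> = B * (R*B/pi)^Suc n * wt c \<xi>" by (simp add: field_simps)
    finally show ?thesis by (simp add: norm_divide)
  qed
  moreover have "cpow f (Suc n) \<in> borel_measurable lborel" by simp
  ultimately show ?case by blast
qed

lemma cpow_lip:
  fixes f f' :: "real \<Rightarrow> complex"
  assumes fm: "f \<in> borel_measurable lborel" and fb: "\<And>\<eta>. cmod (f \<eta>) \<le> cbd R c B \<eta>"
    and fm': "f' \<in> borel_measurable lborel" and fb': "\<And>\<eta>. cmod (f' \<eta>) \<le> cbd R c B \<eta>"
    and fd: "\<And>\<eta>. cmod (f \<eta> - f' \<eta>) \<le> cbd R c d \<eta>"
    and c: "c \<ge> 0" and R: "R \<ge> 0" and B: "B \<ge> 0" and d: "d \<ge> 0"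
  shows "cmod (cpow f n \<xi> - cpow f' n \<xi>) \<le> (n+1) * d * (R*B/pi)^n * wt c \<xi>"
proof (induction n arbitrary: \<xi>)
  case 0
  then show ?case using fd cbd_le[OF d] by (auto intro: order.trans[OF fd])
next
  case (Suc n)
  have [measurable]: "f \<in> borel_measurable lborel" "f' \<in> borel_measurable lborel" using fm fm' by auto
  note P = cpow_props[OF fm fb c R B, of n] and P' = cpow_props[OF fm' fb' c R B, of n]
  have Pm[measurable]: "cpow f n \<in> borel_measurable lborel" "cpow f' n \<in> borel_measurable lborel"
    using P P' by auto
  have B': "B * (R*B/pi)^n \<ge> 0" using B R by simp
  have Pb: "\<And>\<xi>. cmod (cpow f n \<xi>) \<le> (B * (R*B/pi)^n) * wt c \<xi>" using P by simp
  have Pb': "\<And>\<xi>. cmod (cpow f' n \<xi>) \<le> (B * (R*B/pi)^n) * wt c \<xi>" using P' by simp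
  have D: "\<And>\<xi>. cmod (cpow f n \<xi> - cpow f' n \<xi>) \<le> ((n+1) * d * (R*B/pi)^n) * wt c \<xi>" using Suc by (simp add: add.commute)
  have D0: "(n+1) * d * (R*B/pi)^n \<ge> 0" using d R B by simp
  have fdm: "(\<lambda>\<eta>. f \<eta> - f' \<eta>) \<in> borel_measurable lborel" by measurable
  have Pdm: "(\<lambda>\<zeta>. cpow f n \<zeta> - cpow f' n \<zeta>) \<in> borel_measurable lborel" by measurable
  have eq: "cnv f (cpow f n) \<xi> - cnv f' (cpow f' n) \<xi> = cnv (\<lambda>\<eta>. f \<eta> - f' \<eta>) (cpow f n) \<xi> + cnv f' (\<lambda>\<zeta>. cpow f n \<zeta> - cpow f' n \<zeta>) \<xi>"
    by (rule cnv_diff conv_est(1)[OF fm Pm(1) c R B B' fb Pb] conv_est(1)[OF fm' Pm(2) c R B B' fb' Pb']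
        conv_est(1)[OF fm' Pm(1) c R B B' fb' Pb])+
  have e1: "cmod (cnv (\<lambda>\<eta>. f \<eta> - f' \<eta>) (cpow f n) \<xi>) \<le> 2*R*d*(B * (R*B/pi)^n) * wt c \<xi>"
    by (rule conv_est(2)[OF fdm Pm(1) c R d B' fd Pb])
  have e2: "cmod (cnv f' (\<lambda>\<zeta>. cpow f n \<zeta> - cpow f' n \<zeta>) \<xi>) \<le> 2*R*B*((n+1) * d * (R*B/pi)^n) * wt c \<xi>"
    by (rule conv_est(2)[OF fm' Pdm c R B D0 fb' D])
  have "cmod (cpow f (Suc n) \<xi> - cpow f' (Suc n) \<xi>) = cmod (cnv f (cpow f n) \<xi> - cnv f' (cpow f' n) \<xi>) / (2*pi)"
    by (simp add: diff_divide_distrib[symmetric] norm_divide)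
  also have "\<dots> \<le> (2*R*d*(B * (R*B/pi)^n) * wt c \<xi> + 2*R*B*((n+1) * d * (R*B/pi)^n) * wt c \<xi>) / (2*pi)"
    unfolding eq by (intro divide_right_mono order.trans[OF norm_triangle_ineq] add_mono e1 e2) simp
  also have "\<dots> = (real (Suc n) + 1) * d * (R*B/pi)^Suc n * wt c \<xi>" by (simp add: field_simps)
  finally show ?case .
qed

locale FP =
  fixes lam \<Gamma> a :: real and b :: "real \<Rightarrow> real" and ph :: "real \<Rightarrow> complex"
  assumes lam0: "lam > 0" and \<Gamma>0: "\<Gamma> > 0" and a0: "a > 0" and big: "lam > 6 * max \<Gamma> (1/a)"
    and bm: "b \<in> borel_measurable borel" and b01: "\<And>\<xi>. 0 \<le> b \<xi> \<and> b \<xi> \<le> 1"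
    and b0: "\<And>\<xi>. \<bar>\<xi>\<bar> \<ge> sqrt 2 * lam \<Longrightarrow> b \<xi> = 0"
    and phm: "ph \<in> borel_measurable borel" and phb: "\<And>\<xi>. cmod (ph \<xi>) \<le> \<Gamma> * exp (-a*\<bar>\<xi>\<bar>)"
begin

definition "cc = a - 1/lam"
definition "RR = sqrt 2 * lam"
definition "mm \<xi> = b \<xi> / (4*lam\<^sup>2 - \<xi>\<^sup>2)"
definition "MM = 2*\<Gamma>"
definition "BB = \<Gamma> / lam\<^sup>2"
definition "al = RR*BB/pi"
definition "gz h \<xi> = h \<xi> * complex_of_real (mm \<xi>)"
definition "go h \<xi> = \<i> * complex_of_real \<xi> * gz h \<xi>"
definition "EE h \<xi> = (\<Sum>n. cpow (gz h) (Suc n) \<xi> / fact (n+2))"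
definition "QQ h \<xi> = cnv (go h) (go h) \<xi> / complex_of_real (2*pi) / 4 - 4 * complex_of_real (lam\<^sup>2) * EE h \<xi>"
definition "Phi h \<xi> = ph \<xi> + QQ h \<xi>"
definition "Bd h \<longleftrightarrow> h \<in> borel_measurable borel \<and> (\<forall>\<xi>. cmod (h \<xi>) \<le> MM * wt cc \<xi>)"

lemma t_small: "\<Gamma> / lam < 1/6"
  using big lam0 by (simp add: field_simps max_def split: if_splits)

lemma a_big: "1 / lam < a / 6"
proof -
  have "1/a < lam/6" using big by (simp add: max_def split: if_splits)
  then show ?thesis using a0 lam0 by (simp add: field_simps)
qed

lemma cc_pos: "cc > 0" using a_big a0 by (simp add: cc_def)
lemma cc_le_a: "cc \<le> a" using lam0 by (simp add: cc_def)
lemma RR_pos: "RR > 0" using lam0 by (simp add: RR_def)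
lemma BB_pos: "BB > 0" using lam0 \<Gamma>0 by (simp add: BB_def)
lemma MM_pos: "MM > 0" using \<Gamma>0 by (simp add: MM_def)
lemma al_pos: "al > 0" using RR_pos BB_pos by (simp add: al_def)

lemma sqrt2_bound: "sqrt 2 < 3/2"
  by (rule real_less_lsqrt) (auto simp: power2_eq_square)

lemma al_alt: "al = sqrt 2 * (\<Gamma> / lam) / pi"
proof -
  have "sqrt 2 * lam * (\<Gamma> / lam\<^sup>2) / pi = sqrt 2 * (\<Gamma> / lam) / pi"
    using lam0 pi_gt_zero by (simp add: divide_simps power2_eq_square)
  then show ?thesis unfolding al_def RR_def BB_def .
qed

lemma al_small: "al \<le> 1/12"
proof -
  have "sqrt 2 * (\<Gamma> / lam) \<le> 3/2 * (1/6)"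
    using sqrt2_bound t_small \<Gamma>0 lam0 by (intro mult_mono) auto
  then have "sqrt 2 * (\<Gamma> / lam) / pi \<le> (1/4) / pi" by (intro divide_right_mono) auto
  also have "\<dots> \<le> 1/12" using pi_gt3 by (simp add: field_simps)
  finally show ?thesis unfolding al_alt .
qed

lemma al_frac: "al / (1 - al) \<le> 1/11"
  using al_small al_pos by (simp add: field_simps)

lemma K1_alt: "RR^3 * BB / (4*pi*lam\<^sup>2) = sqrt 2 * (\<Gamma> / lam) / (2*pi)"
proof -
  have s: "sqrt 2 ^ 3 = 2 * sqrt 2" by (simp add: power3_eq_cube)
  have "2 * sqrt 2 * lam ^ 3 * (\<Gamma> / lam\<^sup>2) / (4 * pi * lam\<^sup>2) = sqrt 2 * (\<Gamma> / lam) / (2 * pi)"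
    using lam0 pi_gt_zero by (simp add: divide_simps power2_eq_square power3_eq_cube)
  then show ?thesis unfolding RR_def BB_def power_mult_distrib s .
qed

lemma K1_small: "RR^3 * BB / (4*pi*lam\<^sup>2) \<le> 1/24"
proof -
  have "sqrt 2 * (\<Gamma> / lam) \<le> 3/2 * (1/6)"
    using sqrt2_bound t_small \<Gamma>0 lam0 by (intro mult_mono) auto
  then have "sqrt 2 * (\<Gamma> / lam) / (2*pi) \<le> (1/4) / (2*pi)" by (intro divide_right_mono) auto
  also have "\<dots> \<le> 1/24" using pi_gt3 by (simp add: field_simps)
  finally show ?thesis unfolding K1_alt .
qed

lemma BB_MM: "BB = MM / (2*lam\<^sup>2)" unfolding BB_def MM_def by simp

lemma lamBB: "4 * lam\<^sup>2 * BB = 2 * MM" unfolding BB_def MM_def using lam0 by simp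

lemma mm_zero: "\<bar>\<xi>\<bar> \<ge> RR \<Longrightarrow> mm \<xi> = 0"
  unfolding mm_def RR_def using b0 by simp

lemma mm_bound: "\<bar>mm \<xi>\<bar> \<le> 1 / (2*lam\<^sup>2)"
proof (cases "\<bar>\<xi>\<bar> \<ge> RR")
  case True then show ?thesis using mm_zero lam0 by simp
next
  case False
  then have "\<bar>\<xi>\<bar> < RR" by simp
  then have "\<bar>\<xi>\<bar>\<^sup>2 < RR\<^sup>2" by (intro power_strict_mono) auto
  then have "\<xi>\<^sup>2 < RR\<^sup>2" by simp
  then have x2: "\<xi>\<^sup>2 < 2*lam\<^sup>2" unfolding RR_def by (simp add: power_mult_distrib)
  then have pos: "4*lam\<^sup>2 - \<xi>\<^sup>2 > 2*lam\<^sup>2" by simp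
  have l2: "lam\<^sup>2 > 0" using lam0 by simp
  have d: "\<bar>4*lam\<^sup>2 - \<xi>\<^sup>2\<bar> = 4*lam\<^sup>2 - \<xi>\<^sup>2" using pos l2 by (intro abs_of_pos) linarith
  have bb: "\<bar>b \<xi>\<bar> = b \<xi>" using b01[of \<xi>] by simp
  have den: "4*lam\<^sup>2 - \<xi>\<^sup>2 > 0" using pos l2 by linarith
  have "\<bar>mm \<xi>\<bar> = b \<xi> / (4*lam\<^sup>2 - \<xi>\<^sup>2)" unfolding mm_def abs_divide d bb ..
  also have "\<dots> \<le> 1 / (4*lam\<^sup>2 - \<xi>\<^sup>2)" using b01[of \<xi>] den by (intro divide_right_mono) auto
  also have "\<dots> \<le> 1 / (2*lam\<^sup>2)" using pos l2 by (intro divide_left_mono) (auto intro: mult_pos_pos den)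
  finally show ?thesis .
qed

lemma mm_measurable[measurable]: "mm \<in> borel_measurable borel"
  unfolding mm_def[abs_def] using bm by measurable

lemma gz_diff: "gz h \<xi> - gz h' \<xi> = gz (\<lambda>\<xi>. h \<xi> - h' \<xi>) \<xi>"
  unfolding gz_def by (simp add: left_diff_distrib)

lemma go_diff: "go h \<xi> - go h' \<xi> = go (\<lambda>\<xi>. h \<xi> - h' \<xi>) \<xi>"
  unfolding go_def gz_def by (simp add: algebra_simps)

lemma gz_bound:
  assumes "\<And>\<xi>. cmod (h \<xi>) \<le> K * wt cc \<xi>" "K \<ge> 0"
  shows "cmod (gz h \<xi>) \<le> cbd RR cc (K / (2*lam\<^sup>2)) \<xi>"
proof (cases "\<bar>\<xi>\<bar> \<le> RR")
  case True
  have "cmod (gz h \<xi>) = cmod (h \<xi>) * \<bar>mm \<xi>\<bar>" unfolding gz_def by (simp add: norm_mult)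
  also have "\<dots> \<le> (K * wt cc \<xi>) * (1 / (2*lam\<^sup>2))"
    by (intro mult_mono assms mm_bound) (use assms wt_pos[of cc \<xi>] in auto)
  finally show ?thesis unfolding cbd_def using True by simp
next
  case False
  then show ?thesis unfolding cbd_def gz_def using mm_zero[of \<xi>] by simp
qed

lemma go_bound:
  assumes "\<And>\<xi>. cmod (h \<xi>) \<le> K * wt cc \<xi>" "K \<ge> 0"
  shows "cmod (go h \<xi>) \<le> cbd RR cc (RR * (K / (2*lam\<^sup>2))) \<xi>"
proof (cases "\<bar>\<xi>\<bar> \<le> RR")
  case True
  have "cmod (go h \<xi>) = \<bar>\<xi>\<bar> * cmod (gz h \<xi>)" unfolding go_def by (simp add: norm_mult)
  also have "\<dots> \<le> RR * ((K / (2*lam\<^sup>2)) * wt cc \<xi>)"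
    using gz_bound[OF assms, of \<xi>] True by (intro mult_mono) (auto simp: cbd_def)
  finally show ?thesis unfolding cbd_def using True by simp
next
  case False
  then show ?thesis unfolding cbd_def go_def gz_def using mm_zero[of \<xi>] by simp
qed

end

context FP begin

lemma Bd_meas: "Bd h \<Longrightarrow> h \<in> borel_measurable lborel"
  unfolding Bd_def by simp

lemma Bd_bound: "Bd h \<Longrightarrow> cmod (h \<xi>) \<le> MM * wt cc \<xi>"
  unfolding Bd_def by simp

lemma cmod_div_fact: "cmod (z / fact k) = cmod z / fact k"
  by (simp only: norm_divide norm_fact)

lemma gz_meas[measurable]:
  assumes [measurable]: "h \<in> borel_measurable lborel"
  shows "gz h \<in> borel_measurable lborel"
  unfolding gz_def[abs_def] by measurable

lemma go_meas[measurable]: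
  assumes [measurable]: "h \<in> borel_measurable lborel"
  shows "go h \<in> borel_measurable lborel"
  unfolding go_def[abs_def] by measurable

lemma Bd_gz: "Bd h \<Longrightarrow> cmod (gz h \<xi>) \<le> cbd RR cc BB \<xi>"
  using gz_bound[of h MM \<xi>] Bd_bound[of h] MM_pos BB_MM by simp

lemma Bd_go: "Bd h \<Longrightarrow> cmod (go h \<xi>) \<le> cbd RR cc (RR*BB) \<xi>"
  using go_bound[of h MM \<xi>] Bd_bound[of h] MM_pos BB_MM by simp

lemma cpow_Bd:
  assumes "Bd h"
  shows "cpow (gz h) n \<in> borel_measurable lborel \<and> (\<forall>\<xi>. cmod (cpow (gz h) n \<xi>) \<le> BB * al^n * wt cc \<xi>)"
  using cpow_props[OF gz_meas[OF Bd_meas[OF assms]] Bd_gz[OF assms], of n] cc_pos RR_pos BB_pos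
  unfolding al_def by simp

lemma fact_ge1: "(1::real) \<le> fact n"
  by simp

lemma divide_le_self': "(x::real) \<ge> 0 \<Longrightarrow> y \<ge> 1 \<Longrightarrow> x / y \<le> x"
  by (simp add: divide_le_eq mult_le_cancel_left1)

lemma E_term_bound:
  assumes "Bd h"
  shows "cmod (cpow (gz h) (Suc n) \<xi> / fact (n+2)) \<le> BB * al^(Suc n) * wt cc \<xi>"
proof -
  have "cmod (cpow (gz h) (Suc n) \<xi> / fact (n+2)) = cmod (cpow (gz h) (Suc n) \<xi>) / fact (n+2)"
    by (rule cmod_div_fact)
  also have "\<dots> \<le> cmod (cpow (gz h) (Suc n) \<xi>)"
    by (rule divide_le_self'[OF norm_ge_zero fact_ge1])
  also have "\<dots> \<le> BB * al^(Suc n) * wt cc \<xi>" using cpow_Bd[OF assms, of "Suc n"] by blast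
  finally show ?thesis .
qed

lemma al_lt1: "al < 1" using al_small by simp

lemma geo_sums: "(\<lambda>n. K * al^(Suc n)) sums (K * al / (1 - al))"
proof -
  have "(\<lambda>n. al^n) sums (1 / (1 - al))" using geometric_sums[of al] al_pos al_lt1 by simp
  then have "(\<lambda>n. (K*al) * al^n) sums ((K*al) * (1 / (1 - al)))" by (rule sums_mult)
  then show ?thesis by (simp add: mult.assoc)
qed

lemma E_summable:
  assumes "Bd h"
  shows "summable (\<lambda>n. cpow (gz h) (Suc n) \<xi> / fact (n+2))"
  by (rule summable_comparison_test'[OF sums_summable[OF geo_sums[of "BB * wt cc \<xi>"]]])
     (use E_term_bound[OF assms] in \<open>simp add: mult_ac\<close>)

lemma E_bound:
  assumes "Bd h"
  shows "cmod (EE h \<xi>) \<le> BB * al / (1 - al) * wt cc \<xi>"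
proof -
  have "cmod (EE h \<xi>) \<le> (\<Sum>n. BB * wt cc \<xi> * al^(Suc n))"
    unfolding EE_def
    by (rule norm_suminf_le) (use E_term_bound[OF assms] sums_summable[OF geo_sums[of "BB * wt cc \<xi>"]] in \<open>simp_all add: mult_ac\<close>)
  also have "\<dots> = BB * wt cc \<xi> * al / (1 - al)" using geo_sums[of "BB * wt cc \<xi>"] by (simp add: sums_iff)
  finally show ?thesis by (simp add: mult_ac)
qed

lemma E_meas:
  assumes "Bd h"
  shows "EE h \<in> borel_measurable lborel"
proof (rule borel_measurable_LIMSEQ_metric)
  fix i
  have [measurable]: "\<And>n. cpow (gz h) n \<in> borel_measurable lborel" using cpow_Bd[OF assms] by blast
  show "(\<lambda>\<xi>. \<Sum>n<i. cpow (gz h) (Suc n) \<xi> / fact (n+2)) \<in> borel_measurable lborel" by measurable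
next
  fix \<xi>
  show "(\<lambda>i. \<Sum>n<i. cpow (gz h) (Suc n) \<xi> / fact (n+2)) \<longlonglongrightarrow> EE h \<xi>"
    unfolding EE_def by (rule summable_LIMSEQ[OF E_summable[OF assms]])
qed

lemma E_lip:
  assumes h: "Bd h" and h': "Bd h'" and hd: "\<And>\<xi>. cmod (h \<xi> - h' \<xi>) \<le> \<delta> * wt cc \<xi>" and d0: "\<delta> \<ge> 0"
  shows "cmod (EE h \<xi> - EE h' \<xi>) \<le> (\<delta> / (2*lam\<^sup>2)) * al / (1 - al) * wt cc \<xi>"
proof -
  define d where "d = \<delta> / (2*lam\<^sup>2)"
  have dpos: "d \<ge> 0" using d0 by (simp add: d_def)
  have fd: "cmod (gz h \<eta> - gz h' \<eta>) \<le> cbd RR cc d \<eta>" for \<eta>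
    unfolding gz_diff d_def by (rule gz_bound) (use hd d0 in auto)
  have lip: "cmod (cpow (gz h) n \<xi> - cpow (gz h') n \<xi>) \<le> (n+1) * d * al^n * wt cc \<xi>" for n
    using cpow_lip[OF gz_meas[OF Bd_meas[OF h]] Bd_gz[OF h] gz_meas[OF Bd_meas[OF h']] Bd_gz[OF h'] fd
        less_imp_le[OF cc_pos] less_imp_le[OF RR_pos] less_imp_le[OF BB_pos] dpos]
    unfolding al_def by simp
  have tb: "cmod (cpow (gz h) (Suc n) \<xi> / fact (n+2) - cpow (gz h') (Suc n) \<xi> / fact (n+2)) \<le> d * wt cc \<xi> * al^(Suc n)" for n
  proof -
    have "cmod (cpow (gz h) (Suc n) \<xi> / fact (n+2) - cpow (gz h') (Suc n) \<xi> / fact (n+2))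
        = cmod (cpow (gz h) (Suc n) \<xi> - cpow (gz h') (Suc n) \<xi>) / fact (n+2)"
      by (simp only: diff_divide_distrib[symmetric] cmod_div_fact)
    also have "\<dots> \<le> (real (Suc n) + 1) * d * al^(Suc n) * wt cc \<xi> / fact (n+2)"
      using lip[of "Suc n"] by (intro divide_right_mono) auto
    also have "\<dots> = (real (Suc n) + 1) / fact (n+2) * (d * al^(Suc n) * wt cc \<xi>)" by simp
    also have "\<dots> \<le> 1 * (d * al^(Suc n) * wt cc \<xi>)"
    proof (rule mult_right_mono)
      have "real (n+2) \<le> fact (n+2)" using fact_ge_self[of "n+2"] by (metis of_nat_fact of_nat_le_iff)
      then show "(real (Suc n) + 1) / fact (n+2) \<le> 1" by simp
      show "0 \<le> d * al^(Suc n) * wt cc \<xi>" using dpos al_pos wt_pos[of cc \<xi>] by simp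
    qed
    finally show ?thesis by (simp add: mult_ac)
  qed
  have "EE h \<xi> - EE h' \<xi> = (\<Sum>n. cpow (gz h) (Suc n) \<xi> / fact (n+2) - cpow (gz h') (Suc n) \<xi> / fact (n+2))"
    unfolding EE_def by (rule suminf_diff[OF E_summable[OF h] E_summable[OF h']])
  then have "cmod (EE h \<xi> - EE h' \<xi>) \<le> (\<Sum>n. d * wt cc \<xi> * al^(Suc n))"
    using tb sums_summable[OF geo_sums[of "d * wt cc \<xi>"]] by (simp add: norm_suminf_le)
  also have "\<dots> = d * wt cc \<xi> * al / (1 - al)" using geo_sums[of "d * wt cc \<xi>"] by (simp add: sums_iff)
  finally show ?thesis by (simp add: d_def mult_ac)
qed

end

context FP begin

lemma BB_lam: "BB * lam\<^sup>2 = \<Gamma>" unfolding BB_def using lam0 by simp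

lemma go_wt: "Bd h \<Longrightarrow> cmod (go h \<xi>) \<le> (RR*BB) * wt cc \<xi>"
  using Bd_go[of h \<xi>] cbd_le[of "RR*BB" RR cc \<xi>] RR_pos BB_pos by force

lemma conv_go_bound:
  assumes h: "Bd h"
  shows "cmod (cnv (go h) (go h) \<xi>) \<le> 2*RR*(RR*BB)*(RR*BB) * wt cc \<xi>"
  by (rule conv_est(2)[OF go_meas[OF Bd_meas[OF h]] go_meas[OF Bd_meas[OF h]] less_imp_le[OF cc_pos]
      less_imp_le[OF RR_pos] _ _ Bd_go[OF h] go_wt[OF h]]) (use RR_pos BB_pos in auto)

lemma K1_Gamma: "2*RR*(RR*BB)*(RR*BB) / (2*pi) / 4 = (RR^3 * BB / (4*pi*lam\<^sup>2)) * \<Gamma>"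
  using BB_lam[symmetric] lam0 by (simp add: field_simps power3_eq_cube)

lemma Q_bound:
  assumes h: "Bd h"
  shows "cmod (QQ h \<xi>) \<le> (\<Gamma>/24 + 4*\<Gamma>/11) * wt cc \<xi>"
proof -
  have w0: "wt cc \<xi> > 0" by (rule wt_pos)
  have c1: "cmod (cnv (go h) (go h) \<xi> / complex_of_real (2*pi) / 4) \<le> \<Gamma>/24 * wt cc \<xi>"
  proof -
    have "cmod (cnv (go h) (go h) \<xi> / complex_of_real (2*pi) / 4) = cmod (cnv (go h) (go h) \<xi>) / (2*pi) / 4"
      by (simp add: norm_divide)
    also have "\<dots> \<le> 2*RR*(RR*BB)*(RR*BB) * wt cc \<xi> / (2*pi) / 4"
      using conv_go_bound[OF h] by (intro divide_right_mono) auto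
    also have "\<dots> = (RR^3 * BB / (4*pi*lam\<^sup>2)) * \<Gamma> * wt cc \<xi>"
      unfolding K1_Gamma[symmetric] by simp
    also have "\<dots> \<le> (1/24) * \<Gamma> * wt cc \<xi>"
      using K1_small \<Gamma>0 w0 by (intro mult_right_mono) auto
    finally show ?thesis by simp
  qed
  have c2: "cmod (4 * complex_of_real (lam\<^sup>2) * EE h \<xi>) \<le> 4*\<Gamma>/11 * wt cc \<xi>"
  proof -
    have "cmod (4 * complex_of_real (lam\<^sup>2) * EE h \<xi>) = 4 * lam\<^sup>2 * cmod (EE h \<xi>)"
      by (simp add: norm_mult norm_power)
    also have "\<dots> \<le> 4 * lam\<^sup>2 * (BB * al / (1 - al) * wt cc \<xi>)"
      using E_bound[OF h] by (intro mult_left_mono) auto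
    also have "\<dots> = 4 * \<Gamma> * (al / (1 - al)) * wt cc \<xi>"
      using BB_lam[symmetric] by (simp add: mult_ac)
    also have "\<dots> \<le> 4 * \<Gamma> * (1/11) * wt cc \<xi>"
      using al_frac \<Gamma>0 w0 by (intro mult_right_mono mult_left_mono) auto
    finally show ?thesis by simp
  qed
  have "cmod (QQ h \<xi>) \<le> cmod (cnv (go h) (go h) \<xi> / complex_of_real (2*pi) / 4) + cmod (4 * complex_of_real (lam\<^sup>2) * EE h \<xi>)"
    unfolding QQ_def by (rule norm_triangle_ineq4)
  also have "\<dots> \<le> \<Gamma>/24 * wt cc \<xi> + 4*\<Gamma>/11 * wt cc \<xi>" using c1 c2 by (rule add_mono)
  finally show ?thesis by (simp add: algebra_simps)
qed

lemma QQ_meas: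
  assumes h: "Bd h"
  shows "QQ h \<in> borel_measurable lborel"
proof -
  have [measurable]: "go h \<in> borel_measurable lborel" "EE h \<in> borel_measurable lborel"
    using go_meas[OF Bd_meas[OF h]] E_meas[OF h] by auto
  show ?thesis unfolding QQ_def[abs_def] by measurable
qed

lemma Phi_Bd:
  assumes h: "Bd h"
  shows "Bd (Phi h)"
  unfolding Bd_def
proof
  have [measurable]: "QQ h \<in> borel_measurable lborel" using QQ_meas[OF h] .
  have [measurable]: "ph \<in> borel_measurable lborel" using phm by simp
  show "Phi h \<in> borel_measurable borel" unfolding Phi_def[abs_def] by measurable
  show "\<forall>\<xi>. cmod (Phi h \<xi>) \<le> MM * wt cc \<xi>"
  proof
    fix \<xi>
    have w0: "wt cc \<xi> > 0" by (rule wt_pos)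
    have "exp (-a*\<bar>\<xi>\<bar>) \<le> wt cc \<xi>" unfolding wt_def using cc_le_a
      by (simp add: mult_right_mono)
    then have p: "cmod (ph \<xi>) \<le> \<Gamma> * wt cc \<xi>" using phb[of \<xi>] \<Gamma>0
      by (meson order.trans mult_left_mono less_imp_le)
    have "cmod (Phi h \<xi>) \<le> cmod (ph \<xi>) + cmod (QQ h \<xi>)" unfolding Phi_def by (rule norm_triangle_ineq)
    also have "\<dots> \<le> \<Gamma> * wt cc \<xi> + (\<Gamma>/24 + 4*\<Gamma>/11) * wt cc \<xi>" using p Q_bound[OF h] by (rule add_mono)
    also have "\<dots> \<le> MM * wt cc \<xi>" unfolding MM_def using \<Gamma>0 w0 by (simp add: algebra_simps)
    finally show "cmod (Phi h \<xi>) \<le> MM * wt cc \<xi>" .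
  qed
qed

lemma Q_lip:
  assumes h: "Bd h" and h': "Bd h'" and hd: "\<And>\<xi>. cmod (h \<xi> - h' \<xi>) \<le> \<delta> * wt cc \<xi>" and d0: "\<delta> \<ge> 0"
  shows "cmod (QQ h \<xi> - QQ h' \<xi>) \<le> \<delta>/2 * wt cc \<xi>"
proof -
  have w0: "wt cc \<xi> > 0" by (rule wt_pos)
  define d where "d = \<delta> / (2*lam\<^sup>2)"
  have dpos: "d \<ge> 0" using d0 by (simp add: d_def)
  have gm: "go h \<in> borel_measurable lborel" "go h' \<in> borel_measurable lborel"
    using go_meas Bd_meas h h' by auto
  have gdm: "(\<lambda>\<zeta>. go h \<zeta> - go h' \<zeta>) \<in> borel_measurable lborel" using gm by measurable
  have gdb: "cmod (go h \<eta> - go h' \<eta>) \<le> cbd RR cc (RR*d) \<eta>" for \<eta>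
    unfolding go_diff d_def by (rule go_bound) (use hd d0 in auto)
  have gdb': "cmod (go h \<eta> - go h' \<eta>) \<le> (RR*d) * wt cc \<eta>" for \<eta>
    using gdb[of \<eta>] cbd_le[of "RR*d" RR cc \<eta>] RR_pos dpos by force
  have c0: "cc \<ge> 0" and R0: "RR \<ge> 0" and A0: "RR*BB \<ge> 0" and D0: "RR*d \<ge> 0"
    using cc_pos RR_pos BB_pos dpos by auto
  have eq: "cnv (go h) (go h) \<xi> - cnv (go h') (go h') \<xi> = cnv (\<lambda>\<eta>. go h \<eta> - go h' \<eta>) (go h) \<xi> + cnv (go h') (\<lambda>\<zeta>. go h \<zeta> - go h' \<zeta>) \<xi>"
    by (rule cnv_diff conv_est(1)[OF gm(1) gm(1) c0 R0 A0 A0 Bd_go[OF h] go_wt[OF h]]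
        conv_est(1)[OF gm(2) gm(2) c0 R0 A0 A0 Bd_go[OF h'] go_wt[OF h']]
        conv_est(1)[OF gm(2) gm(1) c0 R0 A0 A0 Bd_go[OF h'] go_wt[OF h]])+
  have e1: "cmod (cnv (\<lambda>\<eta>. go h \<eta> - go h' \<eta>) (go h) \<xi>) \<le> 2*RR*(RR*d)*(RR*BB) * wt cc \<xi>"
    by (rule conv_est(2)[OF gdm gm(1) c0 R0 D0 A0 gdb go_wt[OF h]])
  have e2: "cmod (cnv (go h') (\<lambda>\<zeta>. go h \<zeta> - go h' \<zeta>) \<xi>) \<le> 2*RR*(RR*BB)*(RR*d) * wt cc \<xi>"
    by (rule conv_est(2)[OF gm(2) gdm c0 R0 A0 D0 Bd_go[OF h'] gdb'])
  have c1: "cmod ((cnv (go h) (go h) \<xi> - cnv (go h') (go h') \<xi>) / complex_of_real (2*pi) / 4) \<le> \<delta>/24 * wt cc \<xi>"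
  proof -
    have "cmod ((cnv (go h) (go h) \<xi> - cnv (go h') (go h') \<xi>) / complex_of_real (2*pi) / 4)
        = cmod (cnv (go h) (go h) \<xi> - cnv (go h') (go h') \<xi>) / (2*pi) / 4"
      by (simp add: norm_divide)
    also have "\<dots> \<le> (2*RR*(RR*d)*(RR*BB) * wt cc \<xi> + 2*RR*(RR*BB)*(RR*d) * wt cc \<xi>) / (2*pi) / 4"
      unfolding eq by (intro divide_right_mono order.trans[OF norm_triangle_ineq] add_mono e1 e2) auto
    also have "\<dots> = (RR^3 * BB / (4*pi*lam\<^sup>2)) * \<delta> * wt cc \<xi>"
    proof -
      have gen: "\<And>L R D B W. (L::real) > 0 \<Longrightarrow> (2*R*(R*(D/(2*L)))*(R*B)*W + 2*R*(R*B)*(R*(D/(2*L)))*W)/(2*pi)/4 = (R^3*B/(4*pi*L))*D*W"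
        by (simp add: field_simps power3_eq_cube)
      show ?thesis unfolding d_def by (rule gen) (use lam0 in simp)
    qed
    also have "\<dots> \<le> (1/24) * \<delta> * wt cc \<xi>"
      using K1_small d0 w0 by (intro mult_right_mono) auto
    finally show ?thesis by simp
  qed
  have c2: "cmod (4 * complex_of_real (lam\<^sup>2) * EE h \<xi> - 4 * complex_of_real (lam\<^sup>2) * EE h' \<xi>) \<le> 2*\<delta>/11 * wt cc \<xi>"
  proof -
    have "4 * complex_of_real (lam\<^sup>2) * EE h \<xi> - 4 * complex_of_real (lam\<^sup>2) * EE h' \<xi> = 4 * complex_of_real (lam\<^sup>2) * (EE h \<xi> - EE h' \<xi>)"
      by (simp add: right_diff_distrib)
    then have "cmod (4 * complex_of_real (lam\<^sup>2) * EE h \<xi> - 4 * complex_of_real (lam\<^sup>2) * EE h' \<xi>) = 4 * lam\<^sup>2 * cmod (EE h \<xi> - EE h' \<xi>)"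
      by (simp add: norm_mult norm_power)
    also have "\<dots> \<le> 4 * lam\<^sup>2 * ((\<delta> / (2*lam\<^sup>2)) * al / (1 - al) * wt cc \<xi>)"
      using E_lip[OF h h' hd d0] by (intro mult_left_mono) auto
    also have "\<dots> = 2 * \<delta> * (al / (1 - al)) * wt cc \<xi>"
    proof -
      have gen: "\<And>L D A Z W. (L::real) > 0 \<Longrightarrow> 4 * L * ((D / (2*L)) * A / Z * W) = 2 * D * (A / Z) * W"
        by (simp add: field_simps)
      show ?thesis by (rule gen) (use lam0 in simp)
    qed
    also have "\<dots> \<le> 2 * \<delta> * (1/11) * wt cc \<xi>"
      using al_frac d0 w0 by (intro mult_right_mono mult_left_mono) auto
    finally show ?thesis by simp
  qed
  have "QQ h \<xi> - QQ h' \<xi> = (cnv (go h) (go h) \<xi> - cnv (go h') (go h') \<xi>) / complex_of_real (2*pi) / 4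
      - (4 * complex_of_real (lam\<^sup>2) * EE h \<xi> - 4 * complex_of_real (lam\<^sup>2) * EE h' \<xi>)"
    unfolding QQ_def by (simp add: diff_divide_distrib)
  then have "cmod (QQ h \<xi> - QQ h' \<xi>) \<le> cmod ((cnv (go h) (go h) \<xi> - cnv (go h') (go h') \<xi>) / complex_of_real (2*pi) / 4)
      + cmod (4 * complex_of_real (lam\<^sup>2) * EE h \<xi> - 4 * complex_of_real (lam\<^sup>2) * EE h' \<xi>)"
    by (simp only: norm_triangle_ineq4)
  also have "\<dots> \<le> \<delta>/24 * wt cc \<xi> + 2*\<delta>/11 * wt cc \<xi>" using c1 c2 by (rule add_mono)
  also have "\<dots> \<le> \<delta>/2 * wt cc \<xi>" using d0 w0 by (simp add: algebra_simps)
  finally show ?thesis .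
qed

end

context FP begin

lemma Phi_diff: "Phi h \<xi> - Phi h' \<xi> = QQ h \<xi> - QQ h' \<xi>"
  unfolding Phi_def by simp

lemma Bd_zero: "Bd (\<lambda>_. 0)"
  unfolding Bd_def using MM_pos wt_pos[of cc] by (simp add: less_imp_le)

lemma half_sums: "(\<lambda>j. K * (1/2::real)^(j+n)) sums (K * (1/2)^n * 2)"
proof -
  have "(\<lambda>j. (1/2::real)^j) sums (1 / (1 - 1/2))" by (rule geometric_sums) simp
  then have "(\<lambda>j. (K * (1/2)^n) * (1/2::real)^j) sums ((K * (1/2)^n) * (1 / (1 - 1/2)))" by (rule sums_mult)
  then show ?thesis by (simp add: power_add mult_ac)
qed

lemma le_zero_from_geom:
  assumes "\<And>n. (x::real) \<le> K * (1/2)^n"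
  shows "x \<le> 0"
proof -
  have "(\<lambda>n. K * (1/2::real)^n) \<longlonglongrightarrow> K * 0"
    by (intro tendsto_intros LIMSEQ_power_zero) simp
  then show ?thesis using assms by (intro LIMSEQ_le_const[of "\<lambda>n. K * (1/2)^n"]) auto
qed

lemma fixed_point: "\<exists>h. Bd h \<and> Phi h = h"
proof -
  define it where "it n = (Phi ^^ n) (\<lambda>_. 0)" for n
  have it0: "it 0 = (\<lambda>_. 0)" by (simp add: it_def)
  have itS: "it (Suc n) = Phi (it n)" for n by (simp add: it_def)
  have BdI: "Bd (it n)" for n
    by (induction n) (auto simp: it0 itS Bd_zero Phi_Bd)
  have w0: "\<And>\<xi>. wt cc \<xi> > 0" by (rule wt_pos)
  define dd where "dd n \<xi> = it (Suc n) \<xi> - it n \<xi>" for n \<xi>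
  have D: "cmod (dd n \<xi>) \<le> (2*MM*(1/2)^n) * wt cc \<xi>" for n \<xi>
  proof (induction n arbitrary: \<xi>)
    case 0
    have "cmod (dd 0 \<xi>) \<le> MM * wt cc \<xi>" unfolding dd_def itS it0 using Bd_bound[OF Phi_Bd[OF Bd_zero]] by simp
    also have "\<dots> \<le> 2*MM * wt cc \<xi>" using MM_pos w0[of \<xi>] by simp
    finally show ?case by simp
  next
    case (Suc n)
    have "cmod (dd (Suc n) \<xi>) = cmod (QQ (it (Suc n)) \<xi> - QQ (it n) \<xi>)"
      unfolding dd_def itS[of "Suc n"] Phi_diff itS[of n] ..
    also have "\<dots> \<le> (2*MM*(1/2)^n)/2 * wt cc \<xi>"
      by (rule Q_lip[OF BdI BdI]) (use Suc[unfolded dd_def] MM_pos in auto)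
    finally show ?case by simp
  qed
  have Dsum: "summable (\<lambda>n. dd n \<xi>)" for \<xi>
  proof (rule summable_comparison_test')
    show "summable (\<lambda>j. (2*MM*wt cc \<xi>) * (1/2::real)^(j+0))" using half_sums[of "2*MM*wt cc \<xi>" 0] by (rule sums_summable)
    show "\<And>n. 0 \<le> n \<Longrightarrow> norm (dd n \<xi>) \<le> (2*MM*wt cc \<xi>) * (1/2)^(n+0)" using D by (simp add: mult_ac)
  qed
  define hs where "hs \<xi> = (\<Sum>n. dd n \<xi>)" for \<xi>
  have partial: "(\<Sum>i<n. dd i \<xi>) = it n \<xi>" for n \<xi>
    unfolding dd_def using sum_lessThan_telescope[of "\<lambda>i. it i \<xi>" n] by (simp add: it0)
  have itlim: "(\<lambda>n. it n \<xi>) \<longlonglongrightarrow> hs \<xi>" for \<xi>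
    using summable_LIMSEQ[OF Dsum[of \<xi>]] unfolding partial hs_def .
  have tail: "cmod (hs \<xi> - it n \<xi>) \<le> (4*MM*(1/2)^n) * wt cc \<xi>" for n \<xi>
  proof -
    have "hs \<xi> - it n \<xi> = (\<Sum>j. dd (j+n) \<xi>)"
      unfolding hs_def partial[symmetric] using suminf_split_initial_segment[OF Dsum[of \<xi>], of n] by simp
    also have "cmod \<dots> \<le> (\<Sum>j. (2*MM*wt cc \<xi>) * (1/2::real)^(j+n))"
      by (rule norm_suminf_le) (use D sums_summable[OF half_sums] in \<open>simp_all add: mult_ac\<close>)
    also have "\<dots> = (2*MM*wt cc \<xi>) * (1/2)^n * 2" using half_sums by (simp add: sums_iff)
    finally show ?thesis by (simp add: mult_ac)
  qed
  have Bdhs: "Bd hs"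
    unfolding Bd_def
  proof
    show "hs \<in> borel_measurable borel"
    proof (rule borel_measurable_LIMSEQ_metric[of "\<lambda>n. it n"])
      show "\<And>i. it i \<in> borel_measurable borel" using BdI unfolding Bd_def by blast
      show "\<And>x. x \<in> space borel \<Longrightarrow> (\<lambda>i. it i x) \<longlonglongrightarrow> hs x" by (rule itlim)
    qed
    show "\<forall>\<xi>. cmod (hs \<xi>) \<le> MM * wt cc \<xi>"
    proof
      fix \<xi>
      have "(\<lambda>n. cmod (it n \<xi>)) \<longlonglongrightarrow> cmod (hs \<xi>)" by (intro tendsto_intros itlim)
      moreover have "\<forall>n. cmod (it n \<xi>) \<le> MM * wt cc \<xi>" using Bd_bound[OF BdI] by blast
      ultimately show "cmod (hs \<xi>) \<le> MM * wt cc \<xi>" by (intro LIMSEQ_le_const2) auto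
    qed
  qed
  have "Phi hs = hs"
  proof
    fix \<xi>
    have "cmod (Phi hs \<xi> - hs \<xi>) \<le> (4*MM*wt cc \<xi>) * (1/2)^n" for n
    proof -
      have "Phi hs \<xi> - hs \<xi> = (QQ hs \<xi> - QQ (it n) \<xi>) + (it (Suc n) \<xi> - hs \<xi>)"
        unfolding itS Phi_def by simp
      then have "cmod (Phi hs \<xi> - hs \<xi>) \<le> cmod (QQ hs \<xi> - QQ (it n) \<xi>) + cmod (it (Suc n) \<xi> - hs \<xi>)"
        by (simp only: norm_triangle_ineq)
      also have "\<dots> \<le> (4*MM*(1/2)^n)/2 * wt cc \<xi> + (4*MM*(1/2)^(Suc n)) * wt cc \<xi>"
      proof (rule add_mono)
        show "cmod (QQ hs \<xi> - QQ (it n) \<xi>) \<le> (4*MM*(1/2)^n)/2 * wt cc \<xi>"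
          by (rule Q_lip[OF Bdhs BdI]) (use tail MM_pos in auto)
        show "cmod (it (Suc n) \<xi> - hs \<xi>) \<le> (4*MM*(1/2)^(Suc n)) * wt cc \<xi>"
          using tail[of \<xi> "Suc n"] by (simp add: norm_minus_commute)
      qed
      also have "\<dots> = (4*MM*wt cc \<xi>) * (1/2)^n" by (simp add: algebra_simps)
      finally show ?thesis .
    qed
    then have "cmod (Phi hs \<xi> - hs \<xi>) \<le> 0" by (rule le_zero_from_geom)
    then show "Phi hs \<xi> = hs \<xi>" by simp
  qed
  then show ?thesis using Bdhs by blast
qed

end

lemma int_cis_mult:
  fixes f :: "real \<Rightarrow> complex"
  shows "integrable lborel f \<Longrightarrow> integrable lborel (\<lambda>\<xi>. f \<xi> * cis (x*\<xi>))"
  by (rule Bochner_Integration.integrable_bound) (auto simp: norm_mult)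

lemma inv_fourier_add:
  assumes "integrable lborel f" "integrable lborel g"
  shows "inv_fourier (\<lambda>\<xi>. f \<xi> + g \<xi>) x = inv_fourier f x + inv_fourier g x"
  unfolding inv_fourier_def using int_cis_mult[OF assms(1)] int_cis_mult[OF assms(2)]
  by (simp add: distrib_right add_divide_distrib)

lemma inv_fourier_diff:
  assumes "integrable lborel f" "integrable lborel g"
  shows "inv_fourier (\<lambda>\<xi>. f \<xi> - g \<xi>) x = inv_fourier f x - inv_fourier g x"
  unfolding inv_fourier_def using int_cis_mult[OF assms(1)] int_cis_mult[OF assms(2)]
  by (simp add: left_diff_distrib diff_divide_distrib)

lemma inv_fourier_cmult:
  "inv_fourier (\<lambda>\<xi>. c * f \<xi>) x = c * inv_fourier f x"
  unfolding inv_fourier_def by (simp add: mult.assoc)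

lemma inv_fourier_divide:
  "inv_fourier (\<lambda>\<xi>. f \<xi> / c) x = inv_fourier f x / c"
proof -
  have "(\<lambda>\<xi>. f \<xi> / c) = (\<lambda>\<xi>. inverse c * f \<xi>)" by (simp add: divide_inverse mult.commute)
  then show ?thesis using inv_fourier_cmult[of "inverse c" f x] by (simp add: divide_inverse mult.commute)
qed

lemma scaleR_fact: "(z::complex) /\<^sub>R fact n = z / fact n"
  by (simp add: scaleR_conv_of_real divide_inverse of_real_fact mult.commute)

context FP begin

lemma wt_int: "integrable lborel (wt cc)"
  using int_exp_abs[OF cc_pos] unfolding wt_def[abs_def] by simp

lemma bounded_wt_int:
  fixes f :: "real \<Rightarrow> complex"
  assumes "f \<in> borel_measurable lborel" "\<And>\<xi>. cmod (f \<xi>) \<le> K * wt cc \<xi>"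
  shows "integrable lborel f"
proof -
  have "integrable lborel (\<lambda>\<xi>. K * wt cc \<xi>)" using wt_int by simp
  then show ?thesis
    by (rule Bochner_Integration.integrable_bound) (use assms in \<open>auto intro!: AE_I2 order.trans[OF _ abs_ge_self]\<close>)
qed

lemma Bd_int: "Bd h \<Longrightarrow> integrable lborel h"
  by (rule bounded_wt_int[OF Bd_meas Bd_bound])

lemma cpow_int: "Bd h \<Longrightarrow> integrable lborel (cpow (gz h) n)"
  using cpow_Bd[of h n] by (intro bounded_wt_int) auto

lemma gz_int: "Bd h \<Longrightarrow> integrable lborel (gz h)"
  using cpow_int[of h 0] by simp

lemma go_int: "Bd h \<Longrightarrow> integrable lborel (go h)"
  using go_wt[of h] go_meas[OF Bd_meas, of h] by (intro bounded_wt_int) auto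

lemma EE_int:
  assumes h: "Bd h" shows "integrable lborel (EE h)"
proof (rule bounded_wt_int[OF E_meas[OF h], where K = "BB * al / (1 - al)"])
  show "cmod (EE h \<xi>) \<le> BB * al / (1 - al) * wt cc \<xi>" for \<xi> by (rule E_bound[OF h])
qed

lemma cpow_inv:
  assumes h: "Bd h"
  shows "inv_fourier (cpow (gz h) n) x = (inv_fourier (gz h) x)^(Suc n)"
proof (induction n)
  case 0 then show ?case by simp
next
  case (Suc n)
  have "inv_fourier (cpow (gz h) (Suc n)) x = inv_fourier (gz h) x * inv_fourier (cpow (gz h) n) x"
    using inv_fourier_product[OF gz_int[OF h] cpow_int[OF h, of n], of x] by simp
  then show ?case using Suc by simp
qed

lemma exp_series:
  assumes h: "Bd h"
  shows "exp (inv_fourier (gz h) x) - 1 - inv_fourier (gz h) x = inv_fourier (EE h) x"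
proof -
  define u where "u = inv_fourier (gz h) x"
  define T where "T n \<xi> = cpow (gz h) (Suc n) \<xi> / fact (n+2)" for n \<xi>
  define f where "f n = u^n /\<^sub>R fact n" for n
  have e: "f sums exp u" unfolding f_def by (rule exp_converges)
  have S2: "(\<Sum>i<2. f i) = 1 + u" by (simp add: numeral_2_eq_2 f_def)
  have "(\<lambda>n. f (n+2)) sums (exp u - (\<Sum>i<2. f i))"
    by (subst sums_iff_shift) (simp add: e)
  then have s0: "(\<lambda>n. f (n+2)) sums (exp u - 1 - u)" unfolding S2 by (simp add: diff_diff_eq)
  have "(\<lambda>n. f (n+2)) = (\<lambda>n. u^(n+2) / fact (n+2))" unfolding f_def by (rule ext) (rule scaleR_fact)
  then have s1: "(\<lambda>n. u^(n+2) / fact (n+2)) sums (exp u - 1 - u)" using s0 by simp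
  have "u^(n+2) / fact (n+2) = inv_fourier (T n) x" for n
    unfolding T_def inv_fourier_divide u_def cpow_inv[OF h] by simp
  then have s2: "(\<lambda>n. inv_fourier (T n) x) sums (exp u - 1 - u)" using s1 by simp
  have Tm: "T n \<in> borel_measurable lborel" for n
  proof -
    have [measurable]: "cpow (gz h) (Suc n) \<in> borel_measurable lborel" using cpow_Bd[OF h, of "Suc n"] by blast
    show ?thesis unfolding T_def[abs_def] by measurable
  qed
  have Tb: "cmod (T n \<xi>) \<le> BB * al^(Suc n) * wt cc \<xi>" for n \<xi>
    unfolding T_def by (rule E_term_bound[OF h])
  have Ti: "integrable lborel (T n)" for n using Tm Tb by (rule bounded_wt_int)
  define F where "F n \<xi> = T n \<xi> * cis (x*\<xi>)" for n \<xi>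
  have Fi: "integrable lborel (F n)" for n unfolding F_def[abs_def] by (rule int_cis_mult[OF Ti])
  have Fb: "norm (F n \<xi>) \<le> (BB * wt cc \<xi>) * al^(Suc n)" for n \<xi>
    using Tb[of n \<xi>] by (simp add: F_def norm_mult mult_ac)
  have Fs: "summable (\<lambda>n. norm (F n \<xi>))" for \<xi>
    by (rule summable_comparison_test'[OF sums_summable[OF geo_sums[of "BB * wt cc \<xi>"]]]) (use Fb in simp)
  have IFb: "norm (LINT \<xi>|lborel. norm (F n \<xi>)) \<le> (BB * integral\<^sup>L lborel (wt cc)) * al^(Suc n)" for n
  proof -
    have "(LINT \<xi>|lborel. norm (F n \<xi>)) \<le> (LINT \<xi>|lborel. (BB * wt cc \<xi>) * al^(Suc n))"
      by (intro integral_mono Fb) (use Fi wt_int in auto)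
    also have "\<dots> = (BB * integral\<^sup>L lborel (wt cc)) * al^(Suc n)" by simp
    finally show ?thesis by simp
  qed
  have IFs: "summable (\<lambda>n. LINT \<xi>|lborel. norm (F n \<xi>))"
    by (rule summable_comparison_test'[OF sums_summable[OF geo_sums[of "BB * integral\<^sup>L lborel (wt cc)"]]])
       (use IFb in simp)
  have "inv_fourier (EE h) x = (LINT \<xi>|lborel. (\<Sum>n. F n \<xi>)) / complex_of_real (2*pi)"
  proof -
    have "EE h \<xi> * cis (x*\<xi>) = (\<Sum>n. F n \<xi>)" for \<xi>
      unfolding EE_def F_def T_def by (rule suminf_mult2[OF E_summable[OF h]])
    then show ?thesis unfolding inv_fourier_def by simp
  qed
  also have "\<dots> = (\<Sum>n. (LINT \<xi>|lborel. F n \<xi>)) / complex_of_real (2*pi)"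
    by (subst integral_suminf[OF Fi _ IFs]) (use Fs in auto)
  also have "\<dots> = (\<Sum>n. (LINT \<xi>|lborel. F n \<xi>) / complex_of_real (2*pi))"
    by (rule suminf_divide[symmetric]) (rule summable_norm_cancel, rule summable_comparison_test'[OF IFs],
        use integral_norm_bound in auto)
  also have "\<dots> = (\<Sum>n. inv_fourier (T n) x)" unfolding F_def inv_fourier_def ..
  also have "\<dots> = exp u - 1 - u" using s2 by (simp add: sums_iff)
  finally show ?thesis unfolding u_def by simp
qed

end

context FP begin

lemma pow_int:
  fixes f :: "real \<Rightarrow> complex"
  assumes h: "Bd h" and fm: "f \<in> borel_measurable lborel" and fb: "\<And>\<xi>. cmod (f \<xi>) \<le> \<bar>\<xi>\<bar>^k * cmod (h \<xi>)"
  shows "integrable lborel f"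
proof -
  have "integrable lborel (\<lambda>\<xi>. MM * (\<bar>\<xi>\<bar>^k * exp (-cc*\<bar>\<xi>\<bar>)))"
    using int_pow_exp[OF cc_pos, of k] by simp
  then show ?thesis
  proof (rule Bochner_Integration.integrable_bound)
    show "f \<in> borel_measurable lborel" by (rule fm)
    show "AE \<xi> in lborel. norm (f \<xi>) \<le> norm (MM * (\<bar>\<xi>\<bar>^k * exp (-cc*\<bar>\<xi>\<bar>)))"
    proof (intro AE_I2)
      fix \<xi>
      have "cmod (f \<xi>) \<le> \<bar>\<xi>\<bar>^k * (MM * wt cc \<xi>)"
        using fb[of \<xi>] Bd_bound[OF h, of \<xi>] by (meson order.trans mult_left_mono zero_le_power abs_ge_zero)
      also have "\<dots> = MM * (\<bar>\<xi>\<bar>^k * exp (-cc*\<bar>\<xi>\<bar>))" by (simp add: wt_def)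
      also have "\<dots> \<le> norm (MM * (\<bar>\<xi>\<bar>^k * exp (-cc*\<bar>\<xi>\<bar>)))" by simp
      finally show "norm (f \<xi>) \<le> norm (MM * (\<bar>\<xi>\<bar>^k * exp (-cc*\<bar>\<xi>\<bar>)))" .
    qed
  qed
qed

lemma Cinf_sigma:
  assumes h: "Bd h"
  shows "C_inf (inv_fourier h)"
proof -
  have [measurable]: "h \<in> borel_measurable lborel" using Bd_meas[OF h] .
  define D where "D n = inv_fourier (\<lambda>\<xi>. (\<i> * complex_of_real \<xi>)^n * h \<xi>)" for n
  have "(D n has_vector_derivative D (Suc n) x) (at x)" for n x
  proof -
    have i1: "integrable lborel (\<lambda>\<xi>. (\<i> * complex_of_real \<xi>)^n * h \<xi>)"
      by (rule pow_int[OF h, of _ n]) (auto simp: norm_mult norm_power)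
    have i2: "integrable lborel (\<lambda>\<xi>. complex_of_real \<xi> * ((\<i> * complex_of_real \<xi>)^n * h \<xi>))"
      by (rule pow_int[OF h, of _ "Suc n"]) (auto simp: norm_mult norm_power)
    have "(D n has_vector_derivative inv_fourier (\<lambda>\<xi>. \<i> * complex_of_real \<xi> * ((\<i> * complex_of_real \<xi>)^n * h \<xi>)) x) (at x)"
      unfolding D_def by (rule inv_fourier_deriv[OF i1 i2])
    moreover have "(\<lambda>\<xi>. \<i> * complex_of_real \<xi> * ((\<i> * complex_of_real \<xi>)^n * h \<xi>)) = (\<lambda>\<xi>. (\<i> * complex_of_real \<xi>)^(Suc n) * h \<xi>)"
      by (simp add: mult.assoc)
    ultimately show ?thesis unfolding D_def by simp
  qed
  moreover have "D 0 = inv_fourier h" unfolding D_def by simp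
  ultimately show ?thesis unfolding C_inf_def by blast
qed

lemma gz_deriv:
  assumes h: "Bd h"
  shows "(inv_fourier (gz h) has_vector_derivative inv_fourier (go h) x) (at x)"
proof -
  have i2: "integrable lborel (\<lambda>\<xi>. complex_of_real \<xi> * gz h \<xi>)"
  proof (rule Bochner_Integration.integrable_bound[OF go_int[OF h]])
    have [measurable]: "gz h \<in> borel_measurable lborel" using gz_meas[OF Bd_meas[OF h]] .
    show "(\<lambda>\<xi>. complex_of_real \<xi> * gz h \<xi>) \<in> borel_measurable lborel" by measurable
    show "AE \<xi> in lborel. norm (complex_of_real \<xi> * gz h \<xi>) \<le> norm (go h \<xi>)"
      by (intro AE_I2) (simp add: go_def norm_mult)
  qed
  have "go h = (\<lambda>\<xi>. \<i> * complex_of_real \<xi> * gz h \<xi>)" by (rule ext) (simp add: go_def)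
  then show ?thesis using inv_fourier_deriv[OF gz_int[OF h] i2, of x] by simp
qed

lemma ph_int: "integrable lborel ph"
proof -
  have "integrable lborel (\<lambda>\<xi>. \<Gamma> * exp (-a*\<bar>\<xi>\<bar>))" using int_exp_abs[OF a0] by simp
  then show ?thesis
    by (rule Bochner_Integration.integrable_bound) (use phm phb in \<open>auto intro!: AE_I2 order.trans[OF _ abs_ge_self]\<close>)
qed

lemma QQ_int: "Bd h \<Longrightarrow> integrable lborel (QQ h)"
  by (rule bounded_wt_int[OF QQ_meas Q_bound])

lemma main_eq:
  assumes h: "Bd h" and hfx: "Phi h = h"
  shows "inv_fourier h x = inv_fourier ph x + S_op lam (inv_fourier (gz h)) x"
proof -
  define A where "A \<xi> = cnv (go h) (go h) \<xi> / complex_of_real (2*pi)" for \<xi>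
  have Ai: "integrable lborel A" unfolding A_def using cnv_integrable[OF go_int[OF h] go_int[OF h]] by simp
  have "inv_fourier h x = inv_fourier (Phi h) x" using hfx by simp
  also have "\<dots> = inv_fourier ph x + inv_fourier (QQ h) x"
    unfolding Phi_def[abs_def] by (rule inv_fourier_add[OF ph_int QQ_int[OF h]])
  also have "inv_fourier (QQ h) x = inv_fourier (\<lambda>\<xi>. A \<xi> / 4) x - inv_fourier (\<lambda>\<xi>. (4 * complex_of_real (lam\<^sup>2)) * EE h \<xi>) x"
    unfolding QQ_def[abs_def] A_def[symmetric]
    by (rule inv_fourier_diff) (use Ai EE_int[OF h] in auto)
  also have "inv_fourier (\<lambda>\<xi>. A \<xi> / 4) x = (inv_fourier (go h) x)\<^sup>2 / 4"
  proof -
    have "inv_fourier (\<lambda>\<xi>. A \<xi> / 4) x = inv_fourier A x / 4" by (rule inv_fourier_divide)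
    also have "inv_fourier A x = inv_fourier (go h) x * inv_fourier (go h) x"
      unfolding A_def by (rule inv_fourier_product[OF go_int[OF h] go_int[OF h], symmetric])
    finally show ?thesis by (simp add: power2_eq_square)
  qed
  also have "inv_fourier (\<lambda>\<xi>. (4 * complex_of_real (lam\<^sup>2)) * EE h \<xi>) x = 4 * complex_of_real (lam\<^sup>2) * (exp (inv_fourier (gz h) x) - 1 - inv_fourier (gz h) x)"
    unfolding inv_fourier_cmult exp_series[OF h] ..
  also have "(inv_fourier (go h) x)\<^sup>2 / 4 - 4 * complex_of_real (lam\<^sup>2) * (exp (inv_fourier (gz h) x) - 1 - inv_fourier (gz h) x)
      = S_op lam (inv_fourier (gz h)) x"
    unfolding S_op_def using vector_derivative_at[OF gz_deriv[OF h, of x]] by simp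
  finally show ?thesis .
qed

end

theorem theorem7p6:
  fixes lam \<Gamma> a :: real and b :: "real \<Rightarrow> real" and p :: "real \<Rightarrow> real"
  assumes "lam > 0" and "\<Gamma> > 0" and "a > 0" and "lam > 6 * max \<Gamma> (1 / a)"
    and "C_inf b" and "\<forall>\<xi>. 0 \<le> b \<xi> \<and> b \<xi> \<le> 1"
    and "\<forall>\<xi>. \<bar>\<xi>\<bar> \<le> lam \<longrightarrow> b \<xi> = 1"
    and "\<forall>\<xi>. \<bar>\<xi>\<bar> \<ge> sqrt 2 * lam \<longrightarrow> b \<xi> = 0"
    and "integrable lborel p" and "continuous_on UNIV p"
    and "\<forall>\<xi>. cmod (fourier (\<lambda>x. complex_of_real (p x)) \<xi>) \<le> \<Gamma> * exp (- a * \<bar>\<xi>\<bar>)"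
  shows "\<exists>(\<sigma>::real \<Rightarrow> complex) \<sigma>h.
           L2 \<sigma> \<and> C_inf \<sigma> \<and> integrable lborel \<sigma>h \<and> (\<forall>x. \<sigma> x = inv_fourier \<sigma>h x) \<and>
           (\<forall>x. Tb_hat lam b \<sigma>h differentiable (at x)) \<and>
           (\<forall>x. \<sigma> x = S_op lam (Tb_hat lam b \<sigma>h) x + complex_of_real (p x)) \<and>
           (\<forall>\<xi>. cmod (\<sigma>h \<xi>) \<le> 2 * \<Gamma> * exp (- (a - 1 / lam) * \<bar>\<xi>\<bar>))"
proof -
  define P where "P = (\<lambda>x. complex_of_real (p x))"
  have Pi: "integrable lborel P" unfolding P_def using assms(9) by (rule integrable_of_real)
  have Pm[measurable]: "P \<in> borel_measurable lborel" using Pi by auto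
  have Pc: "continuous_on UNIV P" unfolding P_def using assms(10) by (intro continuous_intros)
  define ph where "ph = fourier P"
  obtain D where D0: "D 0 = b" and DD: "\<And>n x. (D n has_vector_derivative D (Suc n) x) (at x)"
    using assms(5) unfolding C_inf_def by blast
  have "continuous_on UNIV b"
    by (rule continuous_on_vector_derivative) (use DD[of 0] D0 in auto)
  then have bm: "b \<in> borel_measurable borel" by (rule borel_measurable_continuous_onI)
  have phm: "ph \<in> borel_measurable borel" unfolding ph_def by (rule fourier_measurable[OF Pm])
  interpret F: FP lam \<Gamma> a b ph
  proof
    show "lam > 0" "\<Gamma> > 0" "a > 0" "lam > 6 * max \<Gamma> (1/a)" using assms(1-4) by auto
    show "b \<in> borel_measurable borel" by (rule bm)
    show "\<And>\<xi>. 0 \<le> b \<xi> \<and> b \<xi> \<le> 1" using assms(6) by blast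
    show "\<And>\<xi>. \<bar>\<xi>\<bar> \<ge> sqrt 2 * lam \<Longrightarrow> b \<xi> = 0" using assms(8) by blast
    show "ph \<in> borel_measurable borel" by (rule phm)
    show "\<And>\<xi>. cmod (ph \<xi>) \<le> \<Gamma> * exp (-a*\<bar>\<xi>\<bar>)" using assms(11) unfolding ph_def P_def by simp
  qed
  obtain h where hB: "F.Bd h" and hfix: "F.Phi h = h" using F.fixed_point by blast
  have Tb: "Tb_hat lam b h = inv_fourier (F.gz h)"
    by (rule ext) (simp add: Tb_hat_def F.gz_def[abs_def] F.mm_def)
  have hi: "integrable lborel h" by (rule F.Bd_int[OF hB])
  have Cinf: "C_inf (inv_fourier h)" by (rule F.Cinf_sigma[OF hB])
  have contS: "continuous_on UNIV (inv_fourier h)"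
  proof -
    obtain E where E0: "E 0 = inv_fourier h" and EE: "\<And>n x. (E n has_vector_derivative E (Suc n) x) (at x)"
      using Cinf unfolding C_inf_def by blast
    show ?thesis by (rule continuous_on_vector_derivative) (use EE[of 0] E0 in auto)
  qed
  have L2S: "L2 (inv_fourier h)"
    unfolding L2_def
  proof
    show m: "inv_fourier h \<in> borel_measurable lborel"
      using borel_measurable_continuous_onI[OF contS] by simp
    have hb: "norm (h \<xi>) \<le> F.MM" for \<xi>
      using F.Bd_bound[OF hB, of \<xi>] wt_le1[of F.cc \<xi>] F.cc_pos F.MM_pos
      by (meson less_imp_le mult_left_le order.trans)
    show "integrable lborel (\<lambda>x. (cmod (inv_fourier h x))\<^sup>2)"
      by (rule inv_fourier_L2[OF hi hb m])
  qed
  have eqn: "inv_fourier h x = S_op lam (Tb_hat lam b h) x + complex_of_real (p x)" for x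
  proof -
    have "inv_fourier ph x = P x" unfolding ph_def by (rule fourier_inversion[OF Pi Pc]) (use F.ph_int ph_def in simp)
    then show ?thesis using F.main_eq[OF hB hfix, of x] unfolding Tb P_def by simp
  qed
  have bound: "cmod (h \<xi>) \<le> 2 * \<Gamma> * exp (- (a - 1 / lam) * \<bar>\<xi>\<bar>)" for \<xi>
    using F.Bd_bound[OF hB, of \<xi>] unfolding F.MM_def F.cc_def wt_def by simp
  have diff: "Tb_hat lam b h differentiable (at x)" for x
    unfolding Tb using F.gz_deriv[OF hB, of x] by (rule differentiableI_vector)
  show ?thesis
    by (intro exI[of _ "inv_fourier h"] exI[of _ h] conjI allI L2S Cinf hi refl diff eqn bound)
qed

end
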